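(* Let $\gamma$ be a translation-invariant (nonnull) specification, $\nu\in\mathcal G_{\mathrm{inv}}(\gamma)$ and $\mu,\lambda\in\mathcal M^+_{1,\mathrm{inv}}$, and assume Condition C1': $(\lambda\otimes\mu)\big(\{(\xi,\sigma):\sigma^\xi\in\Omega_\gamma\}\big)=1$. Then: (1) $h(\mu|\nu)$ exists if and only if $e^\lambda_\nu$ exists, and in that case $$h(\mu|\nu)=-h(\mu)+e^\lambda_\nu-\int_{\Omega\times\Omega}\log\frac{\gamma_0(\sigma^\xi|\sigma^\xi)}{\gamma_0(\xi|\sigma^\xi)}\,\mu(d\sigma)\,\lambda(d\xi).$$ (2) If moreover $\mu\in\mathcal G_{\mathrm{inv}}(\gamma)$ and $e^\lambda_\nu$ exists, then $$h(\mu|\nu)=\lim_{n\to\infty}\frac1{|\Lambda_n|}\int_\Omega\log\frac{d\mu_{\Lambda_n}}{d\nu_{\Lambda_n}}(\xi_{\Lambda_n})\,\lambda(d\xi).$$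
   Context: Let $E$ be a finite set, $\Omega=E^{\mathbb Z^d}$ with product topology and Borel $\sigma$-field $\mathcal F$; $\mathcal F_\Lambda$ is generated by the coordinates in $\Lambda$; $\mathcal S$ = finite subsets of $\mathbb Z^d$; $\mu(\sigma_\Lambda)=\mu(\{\omega:\omega_\Lambda=\sigma_\Lambda\})$ and $\mu_\Lambda$ is the law of $\omega_\Lambda$ under $\mu$; local functions are $\mathcal F_\Delta$-measurable for some finite $\Delta$. Translations $(\tau_x\omega)(y)=\omega(x+y)$; $\mathcal M^+_{1,\mathrm{inv}}$ = translation-invariant probability measures. A specification $\gamma=(\gamma_\Lambda)_{\Lambda\in\mathcal S}$ is a family of probability kernels, $\mathcal F_{\Lambda^c}$-measurable in the boundary condition, proper, consistent ($\int\gamma_\Lambda(A|\omega')\gamma_{\Lambda'}(d\omega'|\omega)=\gamma_{\Lambda'}(A|\omega)$ for $\Lambda\subset\Lambda'$ and all $\omega$) and nonnull ($0<a_\Lambda<\inf_{\sigma,\eta}\gamma_\Lambda(\sigma_\Lambda|\eta)\le\sup_{\sigma,\eta}\gamma_\Lambda(\sigma_\Lambda|\eta)<b_\Lambda<1$); translation-invariant means $\gamma_{\Lambda+x}(A|\omega)=\gamma_\Lambda(\tau_xA|\tau_x\omega)$. $\mathcal G(\gamma)$: probability measures $\mu$ with $\mu(A|\mathcal F_{\Lambda^c})=\gamma_\Lambda(A|\cdot)$ $\mu$-a.s. for all $\Lambda,A$; $\mathcal G_{\mathrm{inv}}(\gamma)=\mathcal G(\gamma)\cap\mathcal M^+_{1,\mathrm{inv}}$.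 $\Omega_\gamma$ is the set of $\omega$ at which $\omega'\mapsto\int f\,d\gamma_\Lambda(\cdot|\omega')$ is continuous for all $\Lambda\in\mathcal S$ and local $f$. For $\sigma,\xi\in\Omega$ and the lexicographic order $\le$ on $\mathbb Z^d$, define $\sigma^\xi(x)=\sigma(x)$ if $x\le0$ and $\sigma^\xi(x)=\xi(x)$ if $x>0$. $\gamma_0(\zeta|\omega)$ denotes $\gamma_{\{0\}}(\{\omega':\omega'(0)=\zeta(0)\}|\omega)$. $\Lambda_n=[-n,n]^d\cap\mathbb Z^d$. $e^\lambda_\nu=-\lim_{n\to\infty}|\Lambda_n|^{-1}\int_\Omega\log\nu(\xi_{\Lambda_n})\,\lambda(d\xi)$ whenever the limit exists. $h_\Lambda(\mu|\nu)=\sum_{\sigma_\Lambda}\mu(\sigma_\Lambda)\log\frac{\mu(\sigma_\Lambda)}{\nu(\sigma_\Lambda)}$, $h(\mu|\nu)=\lim_n|\Lambda_n|^{-1}h_{\Lambda_n}(\mu|\nu)$ when it exists, and $h(\mu)=-\lim_n|\Lambda_n|^{-1}\sum_{\sigma_{\Lambda_n}}\mu(\sigma_{\Lambda_n})\log\mu(\sigma_{\Lambda_n})$ is the Kolmogorov–Sinai entropy. *)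

theory Defs
  imports "HOL-Probability.Probability"
begin

text \<open>Sites are vectors in int^'d (the finite type 'd plays the role of the
coordinate index set {1..d}); the single-site space is a finite type 'e.
Configurations are functions int^'d => 'e.\<close>

definition Omega :: "(int^'d \<Rightarrow> 'e) measure" where
  "Omega = PiM UNIV (\<lambda>_. count_space UNIV)"

definition Fsig :: "(int^'d) set \<Rightarrow> (int^'d \<Rightarrow> 'e) measure" where
  "Fsig S = vimage_algebra UNIV (\<lambda>\<omega>. restrict \<omega> S) (PiM S (\<lambda>_. count_space UNIV))"

definition prod_top :: "(int^'d \<Rightarrow> 'e) topology" where
  "prod_top = product_topology (\<lambda>_. discrete_topology UNIV) UNIV"

definition cyl :: "(int^'d) set \<Rightarrow> (int^'d \<Rightarrow> 'e) \<Rightarrow> (int^'d \<Rightarrow> 'e) set" where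
  "cyl \<Lambda> s = {\<omega>. \<forall>x\<in>\<Lambda>. \<omega> x = s x}"

definition configs :: "(int^'d) set \<Rightarrow> (int^'d \<Rightarrow> 'e) set" where
  "configs \<Lambda> = PiE \<Lambda> (\<lambda>_. UNIV)"

definition shift :: "int^'d \<Rightarrow> (int^'d \<Rightarrow> 'e) \<Rightarrow> (int^'d \<Rightarrow> 'e)" where
  "shift x \<omega> = (\<lambda>y. \<omega> (x + y))"

definition prob_on_Omega :: "(int^'d \<Rightarrow> 'e) measure \<Rightarrow> bool" where
  "prob_on_Omega \<mu> \<longleftrightarrow> prob_space \<mu> \<and> sets \<mu> = sets Omega"

definition inv_measure :: "(int^'d \<Rightarrow> 'e) measure \<Rightarrow> bool" where
  "inv_measure \<mu> \<longleftrightarrow> prob_on_Omega \<mu> \<and> (\<forall>x. distr \<mu> Omega (shift x) = \<mu>)"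

definition is_specification ::
  "((int^'d) set \<Rightarrow> (int^'d \<Rightarrow> 'e) \<Rightarrow> (int^'d \<Rightarrow> 'e) measure) \<Rightarrow> bool" where
  "is_specification \<gamma> \<longleftrightarrow>
    (\<forall>\<Lambda> \<omega>. finite \<Lambda> \<and> \<Lambda> \<noteq> {} \<longrightarrow> prob_on_Omega (\<gamma> \<Lambda> \<omega>)) \<and>
    (\<forall>\<Lambda> A. finite \<Lambda> \<and> \<Lambda> \<noteq> {} \<and> A \<in> sets Omega \<longrightarrow>
        (\<lambda>\<omega>. measure (\<gamma> \<Lambda> \<omega>) A) \<in> borel_measurable (Fsig (- \<Lambda>))) \<and>
    (\<forall>\<Lambda> B \<omega>. finite \<Lambda> \<and> \<Lambda> \<noteq> {} \<and> B \<in> sets (Fsig (- \<Lambda>)) \<longrightarrow>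
        measure (\<gamma> \<Lambda> \<omega>) B = indicator B \<omega>) \<and>
    (\<forall>\<Lambda> \<Lambda>' A \<omega>. finite \<Lambda>' \<and> \<Lambda> \<noteq> {} \<and> \<Lambda> \<subseteq> \<Lambda>' \<and> A \<in> sets Omega \<longrightarrow>
        (\<integral>\<omega>'. measure (\<gamma> \<Lambda> \<omega>') A \<partial>(\<gamma> \<Lambda>' \<omega>)) = measure (\<gamma> \<Lambda>' \<omega>) A)"

definition nonnull_spec ::
  "((int^'d) set \<Rightarrow> (int^'d \<Rightarrow> 'e) \<Rightarrow> (int^'d \<Rightarrow> 'e) measure) \<Rightarrow> bool" where
  "nonnull_spec \<gamma> \<longleftrightarrow>
    (\<forall>\<Lambda>. finite \<Lambda> \<and> \<Lambda> \<noteq> {} \<longrightarrow>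
      (\<exists>a b. 0 < a \<and> b < 1 \<and>
        a < (INF p. measure (\<gamma> \<Lambda> (snd p)) (cyl \<Lambda> (fst p))) \<and>
        (SUP p. measure (\<gamma> \<Lambda> (snd p)) (cyl \<Lambda> (fst p))) < b))"

definition trans_inv_spec ::
  "((int^'d) set \<Rightarrow> (int^'d \<Rightarrow> 'e) \<Rightarrow> (int^'d \<Rightarrow> 'e) measure) \<Rightarrow> bool" where
  "trans_inv_spec \<gamma> \<longleftrightarrow>
    (\<forall>\<Lambda> x A \<omega>. finite \<Lambda> \<and> \<Lambda> \<noteq> {} \<and> A \<in> sets Omega \<longrightarrow>
      measure (\<gamma> ((\<lambda>y. y + x) ` \<Lambda>) \<omega>) A = measure (\<gamma> \<Lambda> (shift x \<omega>)) (shift x ` A))"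

definition gibbs ::
  "((int^'d) set \<Rightarrow> (int^'d \<Rightarrow> 'e) \<Rightarrow> (int^'d \<Rightarrow> 'e) measure) \<Rightarrow> (int^'d \<Rightarrow> 'e) measure \<Rightarrow> bool" where
  "gibbs \<gamma> \<mu> \<longleftrightarrow> prob_on_Omega \<mu> \<and>
    (\<forall>\<Lambda> A. finite \<Lambda> \<and> \<Lambda> \<noteq> {} \<and> A \<in> sets Omega \<longrightarrow>
      (AE \<omega> in \<mu>. real_cond_exp \<mu> (Fsig (- \<Lambda>)) (indicator A) \<omega> = measure (\<gamma> \<Lambda> \<omega>) A))"

definition local_fun :: "((int^'d \<Rightarrow> 'e) \<Rightarrow> real) \<Rightarrow> bool" where
  "local_fun f \<longleftrightarrow> (\<exists>\<Delta>. finite \<Delta> \<and> f \<in> borel_measurable (Fsig \<Delta>))"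

definition Omega_gamma ::
  "((int^'d) set \<Rightarrow> (int^'d \<Rightarrow> 'e) \<Rightarrow> (int^'d \<Rightarrow> 'e) measure) \<Rightarrow> (int^'d \<Rightarrow> 'e) set" where
  "Omega_gamma \<gamma> = {\<omega>. \<forall>\<Lambda> f. finite \<Lambda> \<and> \<Lambda> \<noteq> {} \<and> local_fun f \<longrightarrow>
      limitin euclideanreal (\<lambda>\<omega>'. \<integral>z. f z \<partial>(\<gamma> \<Lambda> \<omega>')) (\<integral>z. f z \<partial>(\<gamma> \<Lambda> \<omega>)) (atin prod_top \<omega>)}"

definition lex_le :: "int^('d::{finite,linorder}) \<Rightarrow> int^('d::{finite,linorder}) \<Rightarrow> bool" where
  "lex_le x y \<longleftrightarrow> x = y \<or> (\<exists>i. x$i < y$i \<and> (\<forall>j<i. x$j = y$j))"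

definition glue :: "(int^('d::{finite,linorder}) \<Rightarrow> 'e) \<Rightarrow> (int^('d::{finite,linorder}) \<Rightarrow> 'e) \<Rightarrow> (int^('d::{finite,linorder}) \<Rightarrow> 'e)" where
  "glue \<sigma> \<xi> = (\<lambda>x. if lex_le x 0 then \<sigma> x else \<xi> x)"

definition gamma0 ::
  "((int^'d) set \<Rightarrow> (int^'d \<Rightarrow> 'e) \<Rightarrow> (int^'d \<Rightarrow> 'e) measure) \<Rightarrow> (int^'d \<Rightarrow> 'e) \<Rightarrow> (int^'d \<Rightarrow> 'e) \<Rightarrow> real" where
  "gamma0 \<gamma> \<zeta> \<omega> = measure (\<gamma> {0} \<omega>) {\<omega>'. \<omega>' 0 = \<zeta> 0}"

definition Lam :: "nat \<Rightarrow> (int^'d) set" where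
  "Lam n = {x. \<forall>i. - int n \<le> x$i \<and> x$i \<le> int n}"

definition hLam :: "(int^'d) set \<Rightarrow> (int^'d \<Rightarrow> 'e) measure \<Rightarrow> (int^'d \<Rightarrow> 'e) measure \<Rightarrow> real" where
  "hLam \<Lambda> \<mu> \<nu> = (\<Sum>s\<in>configs \<Lambda>.
      measure \<mu> (cyl \<Lambda> s) * ln (measure \<mu> (cyl \<Lambda> s) / measure \<nu> (cyl \<Lambda> s)))"

definition rel_entropy_seq :: "(int^'d \<Rightarrow> 'e) measure \<Rightarrow> (int^'d \<Rightarrow> 'e) measure \<Rightarrow> nat \<Rightarrow> real" where
  "rel_entropy_seq \<mu> \<nu> n = hLam (Lam n) \<mu> \<nu> / real (card (Lam n :: (int^'d) set))"

text \<open>h(mu|nu) (meaningful when the sequence converges)\<close>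
definition rel_entropy :: "(int^'d \<Rightarrow> 'e) measure \<Rightarrow> (int^'d \<Rightarrow> 'e) measure \<Rightarrow> real" where
  "rel_entropy \<mu> \<nu> = lim (rel_entropy_seq \<mu> \<nu>)"

definition energy_seq :: "(int^'d \<Rightarrow> 'e) measure \<Rightarrow> (int^'d \<Rightarrow> 'e) measure \<Rightarrow> nat \<Rightarrow> real" where
  "energy_seq lam \<nu> n = - ((\<integral>\<xi>. ln (measure \<nu> (cyl (Lam n) \<xi>)) \<partial>lam) / real (card (Lam n :: (int^'d) set)))"

text \<open>e^lambda_nu (meaningful when the sequence converges)\<close>
definition energy :: "(int^'d \<Rightarrow> 'e) measure \<Rightarrow> (int^'d \<Rightarrow> 'e) measure \<Rightarrow> real" where
  "energy lam \<nu> = lim (energy_seq lam \<nu>)"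

definition ks_entropy :: "(int^'d \<Rightarrow> 'e) measure \<Rightarrow> real" where
  "ks_entropy \<mu> = - lim (\<lambda>n. (\<Sum>s\<in>configs (Lam n).
      measure \<mu> (cyl (Lam n) s) * ln (measure \<mu> (cyl (Lam n) s))) / real (card (Lam n :: (int^'d) set)))"

end

theory Submission
  imports Defs
begin

lemma space_Omega[simp]: "space Omega = UNIV"
  by (auto simp: Omega_def space_PiM PiE_def extensional_def)

lemma meas_coord: "(\<lambda>\<omega>. \<omega> x) \<in> measurable Omega (count_space UNIV)"
  unfolding Omega_def by (rule measurable_component_singleton) simp

lemma meas_into_Omega:
  assumes "\<And>x. (\<lambda>p. f p x) \<in> measurable N (count_space UNIV)"
  shows "f \<in> measurable N Omega"
proof -
  have "(\<lambda>p i. f p i) \<in> measurable N (PiM UNIV (\<lambda>_. count_space UNIV))"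
    by (rule measurable_PiM_single') (auto simp: assms PiE_def extensional_def)
  then show ?thesis unfolding Omega_def by simp
qed

lemma cyl_in_sets:
  assumes sp: "space M = UNIV" and fin: "finite \<Lambda>"
    and co: "\<And>x. x \<in> \<Lambda> \<Longrightarrow> (\<lambda>\<omega>. \<omega> x) \<in> measurable M (count_space UNIV)"
  shows "cyl \<Lambda> s \<in> sets M"
  using fin co
proof (induction \<Lambda> rule: finite_induct)
  case empty
  have "cyl {} s = space M" using sp by (auto simp: cyl_def)
  then show ?case by simp
next
  case (insert x F)
  have "cyl (insert x F) s = ((\<lambda>\<omega>. \<omega> x) -` {s x} \<inter> space M) \<inter> cyl F s"
    using sp by (auto simp: cyl_def)
  moreover have "(\<lambda>\<omega>. \<omega> x) -` {s x} \<inter> space M \<in> sets M"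
    using insert.prems by (intro measurable_sets[where S="{s x}"]) auto
  ultimately show ?case using insert by auto
qed

lemma cyl_Omega[measurable]: "finite \<Lambda> \<Longrightarrow> cyl \<Lambda> s \<in> sets Omega"
  by (rule cyl_in_sets) (auto simp: meas_coord)

lemma space_Fsig[simp]: "space (Fsig T) = UNIV"
  by (simp add: Fsig_def)

lemma restrict_into: "(\<lambda>\<omega>. restrict \<omega> T) \<in> UNIV \<rightarrow> space (PiM T (\<lambda>_. count_space UNIV))"
  by (auto simp: space_PiM)

lemma Fsig_coord: "x \<in> T \<Longrightarrow> (\<lambda>\<omega>. \<omega> x) \<in> measurable (Fsig T) (count_space UNIV)"
proof -
  assume x: "x \<in> T"
  have "(\<lambda>\<omega>. (restrict \<omega> T) x) \<in> measurable (Fsig T) (count_space UNIV)"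
    unfolding Fsig_def
    by (rule measurable_compose[OF measurable_vimage_algebra1[OF restrict_into]])
       (rule measurable_component_singleton[OF x])
  then show ?thesis using x by simp
qed

lemma cyl_Fsig: "finite S \<Longrightarrow> S \<subseteq> T \<Longrightarrow> cyl S s \<in> sets (Fsig T)"
  by (rule cyl_in_sets) (auto intro: Fsig_coord)

lemma sets_Fsig: "sets (Fsig T) = {(\<lambda>\<omega>. restrict \<omega> T) -` B | B. B \<in> sets (PiM T (\<lambda>_. count_space UNIV))}"
  unfolding Fsig_def by (simp add: sets_vimage_algebra2[OF restrict_into])

lemma sets_Fsig_sub: "sets (Fsig T) \<subseteq> sets Omega"
proof
  fix A assume "A \<in> sets (Fsig T)"
  then obtain B where B: "B \<in> sets (PiM T (\<lambda>_. count_space UNIV))"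
      and A: "A = (\<lambda>\<omega>. restrict \<omega> T) -` B \<inter> UNIV"
    unfolding sets_Fsig by auto
  have m: "(\<lambda>\<omega>. restrict \<omega> T) \<in> measurable Omega (PiM T (\<lambda>_. count_space UNIV))"
    unfolding Omega_def by (rule measurable_restrict_subset) simp
  show "A \<in> sets Omega" using measurable_sets[OF m B] A by simp
qed

lemma subalg_Fsig: "sets M = sets Omega \<Longrightarrow> subalgebra M (Fsig T)"
  unfolding subalgebra_def using sets_Fsig_sub
  by (metis sets_eq_imp_space_eq space_Fsig space_Omega)

lemma Fsig_dep:
  fixes f :: "_ \<Rightarrow> real"
  assumes f: "f \<in> borel_measurable (Fsig T)" and eq: "\<forall>x\<in>T. \<omega> x = \<omega>' x"
  shows "f \<omega> = f \<omega>'"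
proof -
  have "f -` {f \<omega>} \<inter> space (Fsig T) \<in> sets (Fsig T)"
    by (rule measurable_sets[OF f]) (intro borel_closed closed_singleton)
  then obtain B where B: "f -` {f \<omega>} = (\<lambda>\<omega>. restrict \<omega> T) -` B \<inter> UNIV"
    unfolding sets_Fsig by auto
  have "restrict \<omega> T = restrict \<omega>' T" using eq by (auto simp: restrict_def)
  moreover have "restrict \<omega> T \<in> B" using B by auto
  ultimately have "\<omega>' \<in> f -` {f \<omega>}" using B by auto
  then show ?thesis by simp
qed

lemma meas_Fsig_Omega: "f \<in> measurable (Fsig T) N \<Longrightarrow> f \<in> measurable Omega N"
  by (rule measurable_from_subalg[OF subalg_Fsig]) simp

lemma finite_configs: "finite \<Lambda> \<Longrightarrow> finite (configs \<Lambda> :: (int^'d \<Rightarrow> 'e::finite) set)"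
  unfolding configs_def by (rule finite_PiE) auto

lemma restrict_cyl: "s \<in> configs \<Lambda> \<Longrightarrow> (\<lambda>\<omega>. restrict \<omega> \<Lambda>) -` {s} = cyl \<Lambda> s"
  unfolding configs_def cyl_def
  by (auto simp: restrict_def PiE_def extensional_def fun_eq_iff)

lemma restrict_meas:
  assumes "finite \<Lambda>"
  shows "(\<lambda>\<omega>. restrict \<omega> \<Lambda>) \<in> measurable Omega (count_space (configs \<Lambda> :: (int^'d \<Rightarrow> 'e::finite) set))"
proof -
  have c: "countable (configs \<Lambda> :: (int^'d \<Rightarrow> 'e::finite) set)"
    using finite_configs[OF assms] by (rule countable_finite)
  have "(\<lambda>\<omega>. restrict \<omega> \<Lambda>) -` {a} \<inter> space Omega \<in> sets (Omega :: (int^'d \<Rightarrow> 'e) measure)"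
    if a: "a \<in> (configs \<Lambda> :: (int^'d \<Rightarrow> 'e) set)" for a
  proof -
    have "(\<lambda>\<omega>. restrict \<omega> \<Lambda>) -` {a} \<inter> space Omega = cyl \<Lambda> a" using restrict_cyl[OF a] by simp
    then show ?thesis using cyl_Omega[OF assms] by simp
  qed
  moreover have "(\<lambda>\<omega>. restrict \<omega> \<Lambda>) \<in> space Omega \<rightarrow> (configs \<Lambda> :: (int^'d \<Rightarrow> 'e) set)"
    by (auto simp: configs_def)
  ultimately show ?thesis by (simp add: measurable_count_space_eq_countable[OF c])
qed

lemma dep_meas:
  fixes f :: "(int^'d \<Rightarrow> 'e::finite) \<Rightarrow> 'b"
  assumes fin: "finite \<Delta>" and dep: "\<And>\<omega> \<omega>'. (\<forall>x\<in>\<Delta>. \<omega> x = \<omega>' x) \<Longrightarrow> f \<omega> = f \<omega>'"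
    and that: "\<forall>y. y \<in> space N"
  shows "f \<in> measurable Omega (N::'b measure)"
proof -
  define g where "g = (\<lambda>s. f (\<lambda>y. if y \<in> \<Delta> then s y else undefined))"
  have "(\<lambda>\<omega>. g (restrict \<omega> \<Delta>)) \<in> measurable Omega N"
    by (rule measurable_compose[OF restrict_meas[OF fin]]) (simp add: that)
  moreover have "g (restrict \<omega> \<Delta>) = f \<omega>" for \<omega>
    unfolding g_def by (rule dep) auto
  ultimately show ?thesis by simp
qed

lemma dep_borel:
  fixes f :: "(int^'d \<Rightarrow> 'e::finite) \<Rightarrow> real"
  assumes fin: "finite \<Delta>" and dep: "\<And>\<omega> \<omega>'. (\<forall>x\<in>\<Delta>. \<omega> x = \<omega>' x) \<Longrightarrow> f \<omega> = f \<omega>'"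
  shows "f \<in> borel_measurable Omega"
  by (rule dep_meas[OF fin dep]) auto

lemma dep_borel2:
  fixes f :: "(int^'d \<Rightarrow> 'e::finite) \<times> (int^'d \<Rightarrow> 'e) \<Rightarrow> real"
  assumes fin: "finite \<Delta>"
    and dep: "\<And>p p'. (\<forall>x\<in>\<Delta>. fst p x = fst p' x \<and> snd p x = snd p' x) \<Longrightarrow> f p = f p'"
  shows "f \<in> borel_measurable (Omega \<Otimes>\<^sub>M Omega)"
proof -
  define C where "C = (configs \<Delta> :: (int^'d \<Rightarrow> 'e) set)"
  have cC: "countable C" unfolding C_def using finite_configs[OF fin] by (rule countable_finite)
  define g where "g = (\<lambda>(s, t). f ((\<lambda>y. if y \<in> \<Delta> then s y else undefined), (\<lambda>y. if y \<in> \<Delta> then t y else undefined)))"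
  have m1: "(\<lambda>p. (restrict (fst p) \<Delta>, restrict (snd p) \<Delta>)) \<in> measurable (Omega \<Otimes>\<^sub>M Omega) (count_space C \<Otimes>\<^sub>M count_space C)"
    unfolding C_def
    by (intro measurable_Pair measurable_compose[OF measurable_fst restrict_meas[OF fin]]
        measurable_compose[OF measurable_snd restrict_meas[OF fin]])
  have "(\<lambda>p. g (restrict (fst p) \<Delta>, restrict (snd p) \<Delta>)) \<in> borel_measurable (Omega \<Otimes>\<^sub>M Omega)"
    by (rule measurable_compose[OF m1]) (simp add: pair_measure_countable[OF cC cC])
  moreover have "g (restrict (fst p) \<Delta>, restrict (snd p) \<Delta>) = f p" for p
    unfolding g_def by simp (rule dep, auto)
  ultimately show ?thesis by simp
qed

lemma shift_meas: "shift x \<in> measurable Omega Omega"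
  unfolding shift_def by (rule meas_into_Omega) (rule meas_coord)

lemma card_Lam: "card (Lam n :: (int^'d) set) = (2 * n + 1) ^ CARD('d)"
proof -
  have b: "bij_betw (\<lambda>x. (\<lambda>i. x $ i)) (Lam n :: (int^'d) set) (PiE UNIV (\<lambda>_. {- int n..int n}))"
    unfolding bij_betw_def inj_on_def Lam_def
  proof (intro conjI ballI impI)
    show "x = y" if "(\<lambda>i. x $ i) = (\<lambda>i. y $ i)" for x y :: "int^'d" using that by (simp add: vec_eq_iff fun_eq_iff)
    show "(\<lambda>x. (\<lambda>i. x $ i)) ` {x :: int^'d. \<forall>i. - int n \<le> x $ i \<and> x $ i \<le> int n} = PiE UNIV (\<lambda>_. {- int n..int n})"
    proof (rule set_eqI, rule iffI)
      fix f :: "'d \<Rightarrow> int" assume "f \<in> PiE UNIV (\<lambda>_. {- int n..int n})"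
      then show "f \<in> (\<lambda>x. (\<lambda>i. x $ i)) ` {x :: int^'d. \<forall>i. - int n \<le> x $ i \<and> x $ i \<le> int n}"
        by (intro image_eqI[where x="vec_lambda f"]) auto
    qed auto
  qed
  have "card (Lam n :: (int^'d) set) = card (PiE (UNIV::'d set) (\<lambda>_. {- int n..int n}))"
    using bij_betw_same_card[OF b] .
  also have "\<dots> = (2 * n + 1) ^ CARD('d)"
    by (simp add: card_PiE nat_add_distrib nat_mult_distrib)
  finally show ?thesis .
qed

lemma finite_Lam[simp]: "finite (Lam n :: (int^'d) set)"
  using card_Lam[of n] by (metis card.infinite nat.simps(3) one_add_one plus_1_eq_Suc power_eq_0_iff add_is_0 zero_neq_one)

lemma card_Lam_pos: "card (Lam n :: (int^'d) set) > 0"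
  by (simp add: card_Lam)

lemma zero_Lam[simp]: "0 \<in> Lam n"
  by (simp add: Lam_def)

lemma Lam_mono: "m \<le> n \<Longrightarrow> Lam m \<subseteq> Lam n"
proof
  fix x assume "m \<le> n" "x \<in> Lam m"
  then have "int m \<le> int n" "\<forall>i. - int m \<le> x $ i \<and> x $ i \<le> int m" by (auto simp: Lam_def)
  then have "- int n \<le> x $ i \<and> x $ i \<le> int n" for i
    using spec[OF \<open>\<forall>i. _\<close>, of i] by linarith
  then show "x \<in> Lam n" unfolding Lam_def by blast
qed

lemma finite_in_Lam:
  assumes "finite (K :: (int^'d) set)"
  shows "\<exists>N. K \<subseteq> Lam N"
proof -
  define N where "N = Max (insert 0 ((\<lambda>(x, i). nat \<bar>x $ i\<bar>) ` (K \<times> UNIV)))"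
  have "finite (insert 0 ((\<lambda>(x, i). nat \<bar>x $ i\<bar>) ` (K \<times> (UNIV :: 'd set))))" using assms by simp
  then have "nat \<bar>x $ i\<bar> \<le> N" if "x \<in> K" for x i
    unfolding N_def using that by (intro Max_ge) auto
  then have "\<bar>x $ i\<bar> \<le> int N" if "x \<in> K" for x i
    using that by (metis int_nat_eq abs_ge_zero of_nat_mono)
  then have "- int N \<le> x $ i \<and> x $ i \<le> int N" if "x \<in> K" for x i
    using that[THEN \<open>\<And>x i. x \<in> K \<Longrightarrow> \<bar>x $ i\<bar> \<le> int N\<close>, of i] by linarith
  then show ?thesis unfolding Lam_def by blast
qed


definition ent :: "'a measure \<Rightarrow> 'b set \<Rightarrow> ('a \<Rightarrow> 'b) \<Rightarrow> real" where
  "ent M V f = - (\<Sum>v\<in>V. measure M (f -` {v} \<inter> space M) * ln (measure M (f -` {v} \<inter> space M)))"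

lemma meas_pair_count:
  assumes f: "f \<in> measurable M (count_space V)" and g: "g \<in> measurable M (count_space W)"
    and V: "countable V" and W: "countable W"
  shows "(\<lambda>\<omega>. (f \<omega>, g \<omega>)) \<in> measurable M (count_space (V \<times> W))"
proof -
  have "(\<lambda>\<omega>. (f \<omega>, g \<omega>)) \<in> measurable M (count_space V \<Otimes>\<^sub>M count_space W)"
    using f g by (rule measurable_Pair)
  then show ?thesis by (simp add: pair_measure_countable[OF V W])
qed

context prob_space begin

lemma fib_sum:
  assumes f: "f \<in> measurable M (count_space V)" and V: "finite V" and S: "S \<subseteq> V"
  shows "prob (f -` S \<inter> space M) = (\<Sum>v\<in>S. prob (f -` {v} \<inter> space M))"
proof -
  have "f -` S \<inter> space M = (\<Union>v\<in>S. f -` {v} \<inter> space M)" by auto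
  moreover have "measure M (\<Union>v\<in>S. f -` {v} \<inter> space M) = (\<Sum>v\<in>S. prob (f -` {v} \<inter> space M))"
  proof (rule measure_finite_Union)
    show "finite S" using V S by (rule finite_subset[rotated])
    show "(\<lambda>v. f -` {v} \<inter> space M) ` S \<subseteq> sets M"
      using S by (auto intro!: measurable_sets[OF f])
    show "disjoint_family_on (\<lambda>v. f -` {v} \<inter> space M) S"
      by (auto simp: disjoint_family_on_def)
  qed (simp add: emeasure_eq_measure)
  ultimately show ?thesis by simp
qed

lemma fib_total:
  assumes f: "f \<in> measurable M (count_space V)" and V: "finite V"
  shows "(\<Sum>v\<in>V. prob (f -` {v} \<inter> space M)) = 1"
proof -
  have "f -` V \<inter> space M = space M" using measurable_space[OF f] by auto
  then show ?thesis using fib_sum[OF f V order_refl] prob_space by simp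
qed

lemma ent_nonneg: "ent M V f \<ge> 0" if "finite V"
proof -
  have "prob A * ln (prob A) \<le> 0" for A
  proof (cases "prob A = 0")
    case False
    then have "prob A > 0" using measure_nonneg[of M A] by linarith
    then have "ln (prob A) \<le> 0" by simp
    then show ?thesis using \<open>prob A > 0\<close> by (simp add: mult_nonneg_nonpos)
  qed simp
  then show ?thesis unfolding ent_def by (simp add: sum_nonpos)
qed

lemma ent_mono:
  assumes g: "g \<in> measurable M (count_space W)" and W: "finite W" and V: "finite V"
    and h: "h ` W \<subseteq> V" and fg: "\<And>\<omega>. \<omega> \<in> space M \<Longrightarrow> f \<omega> = h (g \<omega>)"
  shows "ent M V f \<le> ent M W g"
proof -
  define P where "P v = prob (f -` {v} \<inter> space M)" for v
  define Q where "Q w = prob (g -` {w} \<inter> space M)" for w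
  have gW: "g \<omega> \<in> W" if "\<omega> \<in> space M" for \<omega> using measurable_space[OF g that] by simp
  have Pfib: "f -` {v} \<inter> space M = g -` {w\<in>W. h w = v} \<inter> space M" for v
    using fg gW by auto
  have PQ: "P v = (\<Sum>w\<in>{w\<in>W. h w = v}. Q w)" for v
    unfolding P_def Q_def Pfib by (rule fib_sum[OF g W]) auto
  have QP: "Q w \<le> P (h w)" if "w \<in> W" for w
  proof -
    have "g -` {w} \<inter> space M \<subseteq> f -` {h w} \<inter> space M" using fg by auto
    moreover have "f -` {h w} \<inter> space M \<in> events"
      unfolding Pfib by (rule measurable_sets[OF g]) auto
    ultimately show ?thesis unfolding P_def Q_def
      by (intro finite_measure_mono)
  qed
  have "(\<Sum>v\<in>V. P v * ln (P v)) = (\<Sum>v\<in>V. \<Sum>w\<in>{w\<in>W. h w = v}. Q w * ln (P (h w)))"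
    by (simp add: PQ sum_distrib_right)
  also have "\<dots> = (\<Sum>w\<in>W. Q w * ln (P (h w)))"
    by (rule sum.group[OF W V h])
  also have "\<dots> \<ge> (\<Sum>w\<in>W. Q w * ln (Q w))"
  proof (rule sum_mono)
    fix w assume w: "w \<in> W"
    show "Q w * ln (Q w) \<le> Q w * ln (P (h w))"
    proof (cases "Q w = 0")
      case False
      then have "Q w > 0" unfolding Q_def using measure_nonneg[of M] by (metis less_eq_real_def)
      then show ?thesis using QP[OF w] by (intro mult_left_mono) auto
    qed simp
  qed
  finally show ?thesis unfolding ent_def P_def Q_def by simp
qed

lemma ent_pair:
  assumes f: "f \<in> measurable M (count_space V)" and g: "g \<in> measurable M (count_space W)"
    and V: "finite V" and W: "finite W"
  shows "ent M (V \<times> W) (\<lambda>\<omega>. (f \<omega>, g \<omega>)) \<le> ent M V f + ent M W g"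
proof -
  have fg: "(\<lambda>\<omega>. (f \<omega>, g \<omega>)) \<in> measurable M (count_space (V \<times> W))"
    by (rule meas_pair_count[OF f g]) (use V W in \<open>auto intro: countable_finite\<close>)
  have VW: "finite (V \<times> W)" using V W by simp
  define p where "p v w = prob ((\<lambda>\<omega>. (f \<omega>, g \<omega>)) -` {(v, w)} \<inter> space M)" for v w
  define P where "P v = prob (f -` {v} \<inter> space M)" for v
  define Q where "Q w = prob (g -` {w} \<inter> space M)" for w
  have fM: "f \<omega> \<in> V" "g \<omega> \<in> W" if "\<omega> \<in> space M" for \<omega>
    using measurable_space[OF f that] measurable_space[OF g that] by auto
  have P: "P v = (\<Sum>w\<in>W. p v w)" if "v \<in> V" for v
  proof -
    have "f -` {v} \<inter> space M = (\<lambda>\<omega>. (f \<omega>, g \<omega>)) -` ({v} \<times> W) \<inter> space M" using fM by auto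
    then have "P v = prob ((\<lambda>\<omega>. (f \<omega>, g \<omega>)) -` ({v} \<times> W) \<inter> space M)"
      unfolding P_def by simp
    also have "\<dots> = (\<Sum>x\<in>{v} \<times> W. prob ((\<lambda>\<omega>. (f \<omega>, g \<omega>)) -` {x} \<inter> space M))"
      by (rule fib_sum[OF fg VW]) (use that in auto)
    also have "\<dots> = (\<Sum>w\<in>W. p v w)"
    proof -
      have "{v} \<times> W = (\<lambda>w. (v, w)) ` W" by auto
      then show ?thesis unfolding p_def by (simp add: sum.reindex inj_on_def)
    qed
    finally show ?thesis .
  qed
  have Q: "Q w = (\<Sum>v\<in>V. p v w)" if "w \<in> W" for w
  proof -
    have "g -` {w} \<inter> space M = (\<lambda>\<omega>. (f \<omega>, g \<omega>)) -` (V \<times> {w}) \<inter> space M" using fM by auto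
    then have "Q w = prob ((\<lambda>\<omega>. (f \<omega>, g \<omega>)) -` (V \<times> {w}) \<inter> space M)"
      unfolding Q_def by simp
    also have "\<dots> = (\<Sum>x\<in>V \<times> {w}. prob ((\<lambda>\<omega>. (f \<omega>, g \<omega>)) -` {x} \<inter> space M))"
      by (rule fib_sum[OF fg VW]) (use that in auto)
    also have "\<dots> = (\<Sum>v\<in>V. p v w)"
    proof -
      have "V \<times> {w} = (\<lambda>v. (v, w)) ` V" by auto
      then show ?thesis unfolding p_def by (simp add: sum.reindex inj_on_def)
    qed
    finally show ?thesis .
  qed
  have p0: "p v w \<ge> 0" for v w unfolding p_def by simp
  have pP: "p v w \<le> P v" if "v \<in> V" "w \<in> W" for v w
    unfolding P[OF that(1)] using that p0 W by (intro member_le_sum) auto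
  have pQ: "p v w \<le> Q w" if "v \<in> V" "w \<in> W" for v w
    unfolding Q[OF that(2)] using that p0 V by (intro member_le_sum) auto
  have sP: "(\<Sum>v\<in>V. P v) = 1" unfolding P_def by (rule fib_total[OF f V])
  have sQ: "(\<Sum>w\<in>W. Q w) = 1" unfolding Q_def by (rule fib_total[OF g W])
  have key: "p v w * ln (p v w) - p v w * ln (P v) - p v w * ln (Q w) \<ge> p v w - P v * Q w"
    if "v \<in> V" "w \<in> W" for v w
  proof (cases "p v w = 0")
    case True
    then show ?thesis using measure_nonneg[of M] unfolding P_def Q_def by simp
  next
    case False
    then have pp: "p v w > 0" using p0[of v w] by linarith
    then have Pp: "P v > 0" and Qp: "Q w > 0" using pP[OF that] pQ[OF that] by linarith+
    have "ln (P v * Q w / p v w) \<le> P v * Q w / p v w - 1"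
      using Pp Qp pp by (intro ln_le_minus_one) simp
    then have "p v w * ln (P v * Q w / p v w) \<le> p v w * (P v * Q w / p v w - 1)"
      using pp by (intro mult_left_mono) auto
    also have "\<dots> = P v * Q w - p v w" using pp by (simp add: field_simps)
    finally show ?thesis using Pp Qp pp by (simp add: ln_mult ln_div algebra_simps)
  qed
  have "ent M V f + ent M W g - ent M (V \<times> W) (\<lambda>\<omega>. (f \<omega>, g \<omega>)) =
      (\<Sum>(v,w)\<in>V \<times> W. p v w * ln (p v w) - p v w * ln (P v) - p v w * ln (Q w))"
  proof -
    have "P v * ln (P v) = (\<Sum>w\<in>W. p v w * ln (P v))" if "v \<in> V" for v
      using P[OF that] by (metis sum_distrib_right)
    then have e1: "(\<Sum>v\<in>V. P v * ln (P v)) = (\<Sum>(v,w)\<in>V \<times> W. p v w * ln (P v))"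
      by (simp add: sum.cartesian_product[symmetric])
    have "Q w * ln (Q w) = (\<Sum>v\<in>V. p v w * ln (Q w))" if "w \<in> W" for w
      using Q[OF that] by (metis sum_distrib_right)
    then have e2: "(\<Sum>w\<in>W. Q w * ln (Q w)) = (\<Sum>(v,w)\<in>V \<times> W. p v w * ln (Q w))"
      by (simp add: sum.cartesian_product[symmetric] sum.swap[of _ V W])
    have e3: "ent M (V \<times> W) (\<lambda>\<omega>. (f \<omega>, g \<omega>)) = - (\<Sum>(v,w)\<in>V \<times> W. p v w * ln (p v w))"
    proof -
      have "(\<lambda>(v,w). p v w * ln (p v w)) x = prob ((\<lambda>\<omega>. (f \<omega>, g \<omega>)) -` {x} \<inter> space M) * ln (prob ((\<lambda>\<omega>. (f \<omega>, g \<omega>)) -` {x} \<inter> space M))" for x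
        by (cases x) (simp only: p_def case_prod_conv)
      then have s: "(\<Sum>(v,w)\<in>V \<times> W. p v w * ln (p v w)) = (\<Sum>x\<in>V \<times> W. prob ((\<lambda>\<omega>. (f \<omega>, g \<omega>)) -` {x} \<inter> space M) * ln (prob ((\<lambda>\<omega>. (f \<omega>, g \<omega>)) -` {x} \<inter> space M)))"
        by (intro sum.cong[OF refl])
      show ?thesis unfolding ent_def s by (rule refl)
    qed
    have e4: "ent M V f = - (\<Sum>v\<in>V. P v * ln (P v))" "ent M W g = - (\<Sum>w\<in>W. Q w * ln (Q w))"
      unfolding ent_def P_def Q_def by simp_all
    show ?thesis unfolding e3 e4 e1 e2
      by (simp add: sum_subtractf case_prod_beta')
  qed
  also have "\<dots> \<ge> (\<Sum>(v,w)\<in>V \<times> W. p v w - P v * Q w)"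
    using key by (intro sum_mono) auto
  also have "(\<Sum>(v,w)\<in>V \<times> W. p v w - P v * Q w) = 0"
  proof -
    have "(\<Sum>(v,w)\<in>V \<times> W. p v w) = (\<Sum>v\<in>V. P v)" by (simp add: P sum.cartesian_product)
    moreover have "(\<Sum>(v,w)\<in>V \<times> W. P v * Q w) = (\<Sum>v\<in>V. P v) * (\<Sum>w\<in>W. Q w)"
      by (simp add: sum_product sum.cartesian_product)
    ultimately show ?thesis using sP sQ by (simp add: sum_subtractf case_prod_beta')
  qed
  finally show ?thesis by simp
qed

end

lemma ent_distr:
  assumes T: "T \<in> measurable M N" and f: "f \<in> measurable N (count_space V)"
  shows "ent M V (\<lambda>\<omega>. f (T \<omega>)) = ent (distr M N T) V f"
proof -
  have "(\<lambda>\<omega>. f (T \<omega>)) -` {v} \<inter> space M = T -` (f -` {v} \<inter> space N) \<inter> space M" for v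
    using measurable_space[OF T] by auto
  moreover have "measure (distr M N T) (f -` {v} \<inter> space N) = measure M (T -` (f -` {v} \<inter> space N) \<inter> space M)"
    if "v \<in> V" for v
    using that by (intro measure_distr[OF T] measurable_sets[OF f]) auto
  ultimately show ?thesis unfolding ent_def by simp
qed


definition H :: "(int^'d \<Rightarrow> 'e) measure \<Rightarrow> (int^'d) set \<Rightarrow> real" where
  "H \<mu> \<Lambda> = ent \<mu> (configs \<Lambda>) (\<lambda>\<omega>. restrict \<omega> \<Lambda>)"

lemma pOm_space: "prob_on_Omega \<mu> \<Longrightarrow> space \<mu> = UNIV"
  unfolding prob_on_Omega_def by (metis sets_eq_imp_space_eq space_Omega)

lemma pOm_ps: "prob_on_Omega \<mu> \<Longrightarrow> prob_space \<mu>"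
  unfolding prob_on_Omega_def by simp

lemma pOm_meas: "prob_on_Omega \<mu> \<Longrightarrow> f \<in> measurable Omega N \<Longrightarrow> f \<in> measurable \<mu> N"
  unfolding prob_on_Omega_def using measurable_cong_sets by blast

lemma H_formula:
  assumes "prob_on_Omega \<mu>"
  shows "H \<mu> \<Lambda> = - (\<Sum>s\<in>configs \<Lambda>. measure \<mu> (cyl \<Lambda> s) * ln (measure \<mu> (cyl \<Lambda> s)))"
  unfolding H_def ent_def pOm_space[OF assms]
  by (intro arg_cong[where f=uminus] sum.cong refl) (simp add: restrict_cyl)

lemma H_nonneg: "prob_on_Omega \<mu> \<Longrightarrow> finite \<Lambda> \<Longrightarrow> H \<mu> (\<Lambda> :: (int^'d) set) \<ge> 0"
  for \<mu> :: "(int^'d \<Rightarrow> 'e::finite) measure"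
  unfolding H_def by (rule prob_space.ent_nonneg[OF pOm_ps]) (auto intro: finite_configs)

lemma restrict_meas_mu:
  fixes \<mu> :: "(int^'d \<Rightarrow> 'e::finite) measure"
  assumes "prob_on_Omega \<mu>" "finite \<Lambda>"
  shows "(\<lambda>\<omega>. restrict \<omega> \<Lambda>) \<in> measurable \<mu> (count_space (configs \<Lambda>))"
  by (rule pOm_meas[OF assms(1)]) (rule restrict_meas[OF assms(2)])

lemma H_mono:
  fixes \<mu> :: "(int^'d \<Rightarrow> 'e::finite) measure"
  assumes pm: "prob_on_Omega \<mu>" and B: "finite B" and AB: "A \<subseteq> B"
  shows "H \<mu> A \<le> H \<mu> B"
  unfolding H_def
proof (rule prob_space.ent_mono[OF pOm_ps[OF pm] restrict_meas_mu[OF pm B]])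
  show "finite (configs B :: (int^'d \<Rightarrow> 'e) set)" using B by (rule finite_configs)
  show "finite (configs A :: (int^'d \<Rightarrow> 'e) set)" using B AB by (intro finite_configs) (rule finite_subset)
  show "(\<lambda>t. restrict t A) ` configs B \<subseteq> configs A" by (auto simp: configs_def)
  show "restrict \<omega> A = restrict (restrict \<omega> B) A" for \<omega> using AB by (auto simp: restrict_def fun_eq_iff)
qed

lemma H_union:
  fixes \<mu> :: "(int^'d \<Rightarrow> 'e::finite) measure"
  assumes pm: "prob_on_Omega \<mu>" and A: "finite A" and B: "finite B"
  shows "H \<mu> (A \<union> B) \<le> H \<mu> A + H \<mu> B"
proof -
  interpret prob_space \<mu> using pm by (rule pOm_ps)
  have fA: "finite (configs A :: (int^'d \<Rightarrow> 'e) set)" and fB: "finite (configs B :: (int^'d \<Rightarrow> 'e) set)"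
    using A B by (auto intro: finite_configs)
  have "H \<mu> (A \<union> B) \<le> ent \<mu> (configs A \<times> configs B) (\<lambda>\<omega>. (restrict \<omega> A, restrict \<omega> B))"
    unfolding H_def
  proof (rule ent_mono)
    show "(\<lambda>\<omega>. (restrict \<omega> A, restrict \<omega> B)) \<in> measurable \<mu> (count_space (configs A \<times> configs B))"
      by (rule meas_pair_count[OF restrict_meas_mu[OF pm A] restrict_meas_mu[OF pm B]])
         (use fA fB in \<open>auto intro: countable_finite\<close>)
    show "finite (configs A \<times> configs B :: ((int^'d \<Rightarrow> 'e) \<times> (int^'d \<Rightarrow> 'e)) set)" using fA fB by simp
    show "finite (configs (A \<union> B) :: (int^'d \<Rightarrow> 'e) set)" using A B by (intro finite_configs) simp
    show "(\<lambda>(s, t). (\<lambda>y. if y \<in> A then s y else if y \<in> B then t y else undefined)) ` (configs A \<times> configs B)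
        \<subseteq> configs (A \<union> B)"
      by (auto simp: configs_def PiE_def extensional_def)
    show "restrict \<omega> (A \<union> B) = (\<lambda>(s, t). (\<lambda>y. if y \<in> A then s y else if y \<in> B then t y else undefined)) (restrict \<omega> A, restrict \<omega> B)" for \<omega>
      by (auto simp: restrict_def)
  qed
  also have "\<dots> \<le> H \<mu> A + H \<mu> B"
    unfolding H_def by (rule ent_pair[OF restrict_meas_mu[OF pm A] restrict_meas_mu[OF pm B] fA fB])
  finally show ?thesis .
qed

lemma H_empty:
  fixes \<mu> :: "(int^'d \<Rightarrow> 'e::finite) measure"
  assumes pm: "prob_on_Omega \<mu>"
  shows "H \<mu> {} = 0"
proof -
  interpret prob_space \<mu> using pm by (rule pOm_ps)
  have "configs {} = {(\<lambda>_. undefined) :: int^'d \<Rightarrow> 'e}" by (simp add: configs_def)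
  moreover have "(\<lambda>\<omega>. restrict \<omega> {}) -` {\<lambda>_. undefined} \<inter> space \<mu> = space \<mu>" by auto
  ultimately show ?thesis unfolding H_def ent_def by (simp add: prob_space)
qed

lemma H_Union:
  fixes \<mu> :: "(int^'d \<Rightarrow> 'e::finite) measure"
  assumes pm: "prob_on_Omega \<mu>" and I: "finite I" and fin: "\<And>i. i \<in> I \<Longrightarrow> finite (A i)"
  shows "H \<mu> (\<Union>i\<in>I. A i) \<le> (\<Sum>i\<in>I. H \<mu> (A i))"
  using I fin
proof (induction I rule: finite_induct)
  case empty then show ?case using H_empty[OF pm] by simp
next
  case (insert j I)
  have "H \<mu> (\<Union>i\<in>insert j I. A i) = H \<mu> (A j \<union> (\<Union>i\<in>I. A i))" by simp
  also have "\<dots> \<le> H \<mu> (A j) + H \<mu> (\<Union>i\<in>I. A i)"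
    using insert by (intro H_union[OF pm]) auto
  also have "\<dots> \<le> H \<mu> (A j) + (\<Sum>i\<in>I. H \<mu> (A i))"
    using insert by simp
  finally show ?case using insert by simp
qed

lemma H_shift:
  fixes \<mu> :: "(int^'d \<Rightarrow> 'e::finite) measure"
  assumes inv: "inv_measure \<mu>" and L: "finite \<Lambda>"
  shows "H \<mu> ((\<lambda>y. x + y) ` \<Lambda>) = H \<mu> \<Lambda>"
proof -
  have pm: "prob_on_Omega \<mu>" using inv by (simp add: inv_measure_def)
  interpret prob_space \<mu> using pm by (rule pOm_ps)
  define L' where "L' = (\<lambda>y. x + y) ` \<Lambda>"
  have L': "finite L'" using L by (simp add: L'_def)
  have fC: "finite (configs \<Lambda> :: (int^'d \<Rightarrow> 'e) set)" "finite (configs L' :: (int^'d \<Rightarrow> 'e) set)"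
    using L L' by (auto intro: finite_configs)
  have g: "(\<lambda>\<omega>. restrict (shift x \<omega>) \<Lambda>) \<in> measurable \<mu> (count_space (configs \<Lambda>))"
    by (rule pOm_meas[OF pm], rule measurable_compose[OF shift_meas restrict_meas[OF L]])
  have eq: "ent \<mu> (configs \<Lambda>) (\<lambda>\<omega>. restrict (shift x \<omega>) \<Lambda>) = H \<mu> \<Lambda>"
  proof -
    have "ent \<mu> (configs \<Lambda>) (\<lambda>\<omega>. restrict (shift x \<omega>) \<Lambda>) = ent (distr \<mu> Omega (shift x)) (configs \<Lambda>) (\<lambda>\<omega>. restrict \<omega> \<Lambda>)"
      by (rule ent_distr[OF pOm_meas[OF pm shift_meas] restrict_meas[OF L]])
    also have "distr \<mu> Omega (shift x) = \<mu>" using inv by (simp add: inv_measure_def)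
    finally show ?thesis unfolding H_def .
  qed
  have "H \<mu> L' \<le> ent \<mu> (configs \<Lambda>) (\<lambda>\<omega>. restrict (shift x \<omega>) \<Lambda>)"
    unfolding H_def
  proof (rule ent_mono[OF g fC(1) fC(2)])
    show "(\<lambda>s. \<lambda>z. if z \<in> L' then s (z - x) else undefined) ` configs \<Lambda> \<subseteq> configs L'"
      by (auto simp: configs_def)
    show "restrict \<omega> L' = (\<lambda>s. \<lambda>z. if z \<in> L' then s (z - x) else undefined) (restrict (shift x \<omega>) \<Lambda>)" for \<omega>
      by (auto simp: restrict_def shift_def L'_def fun_eq_iff)
  qed
  moreover have "ent \<mu> (configs \<Lambda>) (\<lambda>\<omega>. restrict (shift x \<omega>) \<Lambda>) \<le> H \<mu> L'"
    unfolding H_def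
  proof (rule ent_mono[OF restrict_meas_mu[OF pm L'] fC(2) fC(1)])
    show "(\<lambda>t. \<lambda>y. if y \<in> \<Lambda> then t (x + y) else undefined) ` configs L' \<subseteq> configs \<Lambda>"
      by (auto simp: configs_def)
    show "restrict (shift x \<omega>) \<Lambda> = (\<lambda>t. \<lambda>y. if y \<in> \<Lambda> then t (x + y) else undefined) (restrict \<omega> L')" for \<omega>
      by (auto simp: restrict_def shift_def L'_def fun_eq_iff)
  qed
  ultimately show ?thesis using eq by (simp add: L'_def)
qed


lemma cover_coord:
  fixes y m K n :: int
  assumes "0 \<le> m" "-n \<le> y" "y \<le> n" "n \<le> m + (2*m+1)*K"
  shows "-K \<le> (y+m) div (2*m+1) \<and> (y+m) div (2*m+1) \<le> K \<and> -m \<le> y - (2*m+1)*((y+m) div (2*m+1)) \<and> y - (2*m+1)*((y+m) div (2*m+1)) \<le> m"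
proof -
  define c where "c = 2*m+1"
  define q where "q = (y+m) div c"
  define r where "r = (y+m) mod c"
  have c: "c > 0" using assms by (simp add: c_def)
  have qr: "y + m = c * q + r" by (simp add: q_def r_def)
  have r: "0 \<le> r" "r < c" using c by (simp_all add: r_def)
  have "c * (-K - 1) < c * q" using qr r assms by (simp add: c_def algebra_simps)
  then have q1: "-K \<le> q" using c mult_less_cancel_left_pos by (smt (verit))
  have "c * q < c * (K + 1)" using qr r assms by (simp add: c_def algebra_simps)
  then have q2: "q \<le> K" using c mult_less_cancel_left_pos by (smt (verit))
  show ?thesis using q1 q2 qr r unfolding c_def[symmetric] q_def[symmetric] by (simp add: c_def)
qed

lemma Lam_cover:
  fixes m K n :: nat
  assumes "n \<le> m + (2*m+1)*K"
  shows "(Lam n :: (int^'d) set) \<subseteq> (\<Union>k\<in>Lam K. (\<lambda>y. (\<chi> i. (2 * int m + 1) * k$i) + y) ` Lam m)"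
proof
  fix y :: "int^'d" assume y: "y \<in> Lam n"
  define k :: "int^'d" where "k = (\<chi> i. (y$i + int m) div (2 * int m + 1))"
  define r :: "int^'d" where "r = y - (\<chi> i. (2 * int m + 1) * k$i)"
  have "int n \<le> int (m + (2*m+1)*K)" using assms by (simp only: of_nat_le_iff)
  then have a: "int n \<le> int m + (2 * int m + 1) * int K" by (simp add: algebra_simps)
  have yi: "- int n \<le> y$i" "y$i \<le> int n" for i using y unfolding Lam_def by auto
  have cc: "- int K \<le> k$i \<and> k$i \<le> int K \<and> - int m \<le> r$i \<and> r$i \<le> int m" for i
  proof -
    have "k$i = (y$i + int m) div (2 * int m + 1)" "r$i = y$i - (2 * int m + 1) * ((y$i + int m) div (2 * int m + 1))"
      unfolding k_def r_def by simp_all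
    then show ?thesis using cover_coord[of "int m" "int n" "y$i" "int K", OF _ yi a] by simp
  qed
  have "k \<in> Lam K" "r \<in> Lam m" using cc unfolding Lam_def by auto
  moreover have "y = (\<chi> i. (2 * int m + 1) * k$i) + r" by (simp add: r_def)
  ultimately show "y \<in> (\<Union>k\<in>Lam K. (\<lambda>y. (\<chi> i. (2 * int m + 1) * k$i) + y) ` Lam m)" by blast
qed

lemma H_cover:
  fixes \<mu> :: "(int^'d \<Rightarrow> 'e::finite) measure"
  assumes inv: "inv_measure \<mu>" and nK: "n \<le> m + (2*m+1)*K"
  shows "H \<mu> (Lam n) \<le> real (card (Lam K :: (int^'d) set)) * H \<mu> (Lam m)"
proof -
  have pm: "prob_on_Omega \<mu>" using inv by (simp add: inv_measure_def)
  define U where "U = (\<Union>k\<in>(Lam K :: (int^'d) set). (\<lambda>y. (\<chi> i. (2 * int m + 1) * k$i) + y) ` Lam m)"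
  have "H \<mu> (Lam n) \<le> H \<mu> U"
    using Lam_cover[OF nK] by (intro H_mono[OF pm]) (auto simp: U_def)
  also have "\<dots> \<le> (\<Sum>k\<in>(Lam K :: (int^'d) set). H \<mu> ((\<lambda>y. (\<chi> i. (2 * int m + 1) * k$i) + y) ` Lam m))"
    unfolding U_def by (rule H_Union[OF pm]) auto
  also have "\<dots> = (\<Sum>k\<in>(Lam K :: (int^'d) set). H \<mu> (Lam m))"
    by (intro sum.cong refl H_shift[OF inv]) simp
  finally show ?thesis by simp
qed

lemma seq_at_top: "filterlim (\<lambda>n::nat. 2 * real n + 1) at_top sequentially"
proof (subst filterlim_at_top, intro allI)
  fix Z :: real
  show "eventually (\<lambda>n. Z \<le> 2 * real n + 1) sequentially"
    unfolding eventually_sequentially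
  proof (intro exI allI impI)
    fix n assume "nat \<lceil>Z\<rceil> \<le> n"
    then have "Z \<le> real n" by linarith
    then show "Z \<le> 2 * real n + 1" by simp
  qed
qed

lemma q_lim: "(\<lambda>n::nat. ((2 * real n + C) / (2 * real n + 1)) ^ d) \<longlonglongrightarrow> 1"
proof -
  have "(\<lambda>n::nat. (C - 1) / (2 * real n + 1)) \<longlonglongrightarrow> 0"
    by (rule real_tendsto_divide_at_top[OF tendsto_const seq_at_top])
  then have "(\<lambda>n::nat. 1 + (C - 1) / (2 * real n + 1)) \<longlonglongrightarrow> 1 + 0"
    by (intro tendsto_add tendsto_const)
  moreover have "1 + (C - 1) / (2 * real n + 1) = (2 * real n + C) / (2 * real n + 1)" for n
    by (simp add: field_simps)
  ultimately have "(\<lambda>n::nat. (2 * real n + C) / (2 * real n + 1)) \<longlonglongrightarrow> 1" by simp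
  from tendsto_power[OF this, of d] show ?thesis by simp
qed

lemma card_Lam_real: "real (card (Lam n :: (int^'d) set)) = (2 * real n + 1) ^ CARD('d)"
  unfolding card_Lam by (simp add: add.commute)

lemma H_ratio_bound:
  fixes \<mu> :: "(int^'d \<Rightarrow> 'e::finite) measure"
  assumes inv: "inv_measure \<mu>"
  shows "H \<mu> (Lam n) / card (Lam n :: (int^'d) set) \<le>
    ((2 * real n + 3 * (2 * real m + 1)) / (2 * real n + 1)) ^ CARD('d) * (H \<mu> (Lam m) / card (Lam m :: (int^'d) set))"
proof -
  have pm: "prob_on_Omega \<mu>" using inv by (simp add: inv_measure_def)
  define c where "c = 2 * m + 1"
  define K where "K = n div c + 1"
  have c0: "c > 0" by (simp add: c_def)
  have nK: "n \<le> m + (2*m+1)*K"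
  proof -
    have "n mod c < c" using c0 by simp
    moreover have "n = c * (n div c) + n mod c" by simp
    ultimately have "n < c * (n div c) + c" by linarith
    then show ?thesis unfolding K_def c_def by (simp add: algebra_simps)
  qed
  have Hm: "H \<mu> (Lam m) \<ge> 0" by (rule H_nonneg[OF pm]) simp
  have cK: "real c * (2 * real K + 1) \<le> 2 * real n + 3 * real c"
  proof -
    have "c * (n div c) \<le> n" by simp
    then have "real c * real (n div c) \<le> real n" by (metis of_nat_le_iff of_nat_mult)
    then show ?thesis unfolding K_def by (simp add: algebra_simps)
  qed
  define d where "d = CARD('d)"
  have cr: "real c = 2 * real m + 1" by (simp add: c_def)
  have "H \<mu> (Lam n) / card (Lam n :: (int^'d) set) \<le> real (card (Lam K :: (int^'d) set)) * H \<mu> (Lam m) / card (Lam n :: (int^'d) set)"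
    using H_cover[OF inv nK] card_Lam_pos[of n] by (intro divide_right_mono) auto
  also have "\<dots> = ((2 * real K + 1) * real c / (2 * real n + 1)) ^ CARD('d) * (H \<mu> (Lam m) / card (Lam m :: (int^'d) set))"
  proof -
    have p: "((2 * real K + 1) * real c / (2 * real n + 1)) ^ d = (2 * real K + 1) ^ d * real c ^ d / (2 * real n + 1) ^ d"
      by (simp add: power_divide power_mult_distrib)
    have pos: "real c ^ d > 0" "(2 * real n + 1) ^ d > 0" using c0 by simp_all
    show ?thesis unfolding card_Lam_real d_def[symmetric] p cr[symmetric] using pos c0 by (simp add: field_simps)
  qed
  also have "\<dots> \<le> ((2 * real n + 3 * (2 * real m + 1)) / (2 * real n + 1)) ^ CARD('d) * (H \<mu> (Lam m) / card (Lam m :: (int^'d) set))"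
  proof (rule mult_right_mono)
    have "(2 * real K + 1) * real c \<le> 2 * real n + 3 * (2 * real m + 1)" using cK cr by (simp add: algebra_simps)
    then have "(2 * real K + 1) * real c / (2 * real n + 1) \<le> (2 * real n + 3 * (2 * real m + 1)) / (2 * real n + 1)"
      by (intro divide_right_mono) auto
    then show "((2 * real K + 1) * real c / (2 * real n + 1)) ^ CARD('d) \<le> ((2 * real n + 3 * (2 * real m + 1)) / (2 * real n + 1)) ^ CARD('d)"
      by (intro power_mono) auto
    show "0 \<le> H \<mu> (Lam m) / card (Lam m :: (int^'d) set)" using Hm by simp
  qed
  finally show ?thesis .
qed

lemma ks_conv:
  fixes \<mu> :: "(int^'d \<Rightarrow> 'e::finite) measure"
  assumes inv: "inv_measure \<mu>"
  shows "convergent (\<lambda>n. H \<mu> (Lam n) / card (Lam n :: (int^'d) set))"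
proof -
  have pm: "prob_on_Omega \<mu>" using inv by (simp add: inv_measure_def)
  define a where "a n = H \<mu> (Lam n) / card (Lam n :: (int^'d) set)" for n
  have a0: "a n \<ge> 0" for n unfolding a_def using H_nonneg[OF pm, of "Lam n"] by simp
  define L where "L = Inf (range a)"
  have bdd: "bdd_below (range a)" using a0 by (intro bdd_belowI[of _ 0]) auto
  have La: "L \<le> a n" for n unfolding L_def using bdd by (intro cInf_lower) auto
  have "a \<longlonglongrightarrow> L"
  proof (rule LIMSEQ_I)
    fix r :: real assume r: "0 < r"
    have "L < L + r / 2" using r by simp
    then obtain m where m: "a m < L + r / 2" unfolding L_def using cInf_lessD[of "range a" "L + r/2"] L_def by auto
    define q where "q n = ((2 * real n + 3 * (2 * real m + 1)) / (2 * real n + 1)) ^ CARD('d)" for n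
    have "(\<lambda>n. q n * a m) \<longlonglongrightarrow> 1 * a m" unfolding q_def by (intro tendsto_mult q_lim tendsto_const)
    then have "eventually (\<lambda>n. dist (q n * a m) (a m) < r / 2) sequentially"
      using r by (intro tendstoD) simp_all
    then obtain N where N: "\<And>n. n \<ge> N \<Longrightarrow> dist (q n * a m) (a m) < r / 2" by (auto simp: eventually_sequentially)
    show "\<exists>no. \<forall>n\<ge>no. norm (a n - L) < r"
    proof (intro exI allI impI)
      fix n assume "n \<ge> N"
      then have "dist (q n * a m) (a m) < r / 2" using N by blast
      then have "q n * a m < a m + r / 2" unfolding dist_real_def by linarith
      moreover have "a n \<le> q n * a m" unfolding a_def q_def by (rule H_ratio_bound[OF inv])
      ultimately show "norm (a n - L) < r" using La[of n] m by simp
    qed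
  qed
  then show ?thesis unfolding a_def convergent_def by blast
qed


lemma lex_le_refl[simp]: "lex_le x x"
  by (simp add: lex_le_def)

lemma lex_le_total: "lex_le x y \<or> lex_le y x"
proof (cases "x = y")
  case True then show ?thesis by simp
next
  case False
  define D where "D = {i. x $ i \<noteq> y $ i}"
  have "D \<noteq> {}" using False by (auto simp: D_def vec_eq_iff)
  moreover have "finite D" by simp
  ultimately have i: "Min D \<in> D" by (intro Min_in)
  have lt: "x $ j = y $ j" if "j < Min D" for j
  proof (rule ccontr)
    assume "x $ j \<noteq> y $ j"
    then have "j \<in> D" by (simp add: D_def)
    then have "Min D \<le> j" using \<open>finite D\<close> by simp
    then show False using that by simp
  qed
  show ?thesis
  proof (cases "x $ Min D < y $ Min D")
    case True then show ?thesis using lt unfolding lex_le_def by blast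
  next
    case False
    then have "y $ Min D < x $ Min D" using i by (auto simp: D_def)
    then show ?thesis using lt unfolding lex_le_def by (metis (full_types))
  qed
qed

lemma lex_le_antisym: "lex_le x y \<Longrightarrow> lex_le y x \<Longrightarrow> x = y"
proof (rule ccontr)
  assume a: "lex_le x y" "lex_le y x" "x \<noteq> y"
  then obtain i where i: "x $ i < y $ i" "\<forall>j<i. x $ j = y $ j" unfolding lex_le_def by blast
  from a obtain k where k: "y $ k < x $ k" "\<forall>j<k. y $ j = x $ j" unfolding lex_le_def by blast
  show False
  proof (cases i k rule: linorder_cases)
    case less then have "y $ i = x $ i" using k by blast
    then show ?thesis using i by simp
  next
    case equal then show ?thesis using i k by simp
  next
    case greater then have "x $ k = y $ k" using i by blast
    then show ?thesis using k by simp
  qed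
qed

lemma lex_le_trans: "lex_le x y \<Longrightarrow> lex_le y z \<Longrightarrow> lex_le x z"
proof -
  assume a: "lex_le x y" "lex_le y z"
  show ?thesis
  proof (cases "x = y \<or> y = z")
    case True then show ?thesis using a by auto
  next
    case False
    then obtain i where i: "x $ i < y $ i" "\<forall>j<i. x $ j = y $ j" using a unfolding lex_le_def by blast
    from False obtain k where k: "y $ k < z $ k" "\<forall>j<k. y $ j = z $ j" using a unfolding lex_le_def by blast
    show ?thesis
    proof (cases i k rule: linorder_cases)
      case less
      then have "x $ i < z $ i" "\<forall>j<i. x $ j = z $ j" using i k by auto
      then show ?thesis unfolding lex_le_def by blast
    next
      case equal
      then have "x $ i < z $ i" "\<forall>j<i. x $ j = z $ j" using i k by auto
      then show ?thesis unfolding lex_le_def by blast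
    next
      case greater
      then have "x $ k < z $ k" "\<forall>j<k. x $ j = z $ j" using i k by auto
      then show ?thesis unfolding lex_le_def by blast
    qed
  qed
qed

lemma lex_le_shift: "lex_le (x + c) (y + c) \<longleftrightarrow> lex_le x y"
  unfolding lex_le_def by (auto simp: vec_eq_iff)

lemma lex_le_0: "lex_le (y - x) 0 \<longleftrightarrow> lex_le y x"
  using lex_le_shift[of "y - x" x 0] by simp


definition gam0 :: "((int^'d) set \<Rightarrow> (int^'d \<Rightarrow> 'e) \<Rightarrow> (int^'d \<Rightarrow> 'e) measure) \<Rightarrow> 'e \<Rightarrow> (int^'d \<Rightarrow> 'e) \<Rightarrow> real" where
  "gam0 \<gamma> a \<omega> = measure (\<gamma> {0} \<omega>) {\<omega>'. \<omega>' 0 = a}"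

lemma gamma0_gam0: "gamma0 \<gamma> \<zeta> \<omega> = gam0 \<gamma> (\<zeta> 0) \<omega>"
  by (simp add: gamma0_def gam0_def)

lemma cyl0: "{\<omega>'. \<omega>' 0 = a} = cyl {0} (\<lambda>_. a)"
  by (auto simp: cyl_def)

lemma cyl_split0: "0 \<in> \<Delta> \<Longrightarrow> cyl \<Delta> \<eta> = cyl (\<Delta> - {0}) \<eta> \<inter> {\<omega>. \<omega> 0 = \<eta> 0}"
  by (auto simp: cyl_def)

lemma int_bounds:
  fixes f :: "'a \<Rightarrow> real"
  assumes ps: "prob_space M" and f: "f \<in> borel_measurable M" and C: "C \<in> sets M"
    and lo: "\<And>x. x \<in> C \<Longrightarrow> a \<le> f x" and hi: "\<And>x. x \<in> C \<Longrightarrow> f x \<le> b"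
  shows "a * measure M C \<le> (\<integral>x. indicator C x * f x \<partial>M)" "(\<integral>x. indicator C x * f x \<partial>M) \<le> b * measure M C"
proof -
  interpret prob_space M by (rule ps)
  have bnd: "norm (indicator C x * f x) \<le> max \<bar>a\<bar> \<bar>b\<bar>" for x
    using lo[of x] hi[of x] by (auto simp: indicator_def)
  have int: "integrable M (\<lambda>x. indicator C x * f x)"
    by (rule integrable_const_bound[where B="max \<bar>a\<bar> \<bar>b\<bar>"]) (use bnd f C in auto)
  have intC: "integrable M (\<lambda>x. indicator C x * c)" for c :: real
    using C by (intro integrable_mult_left integrable_real_indicator) (auto simp: emeasure_eq_measure)
  have eqc: "(\<integral>x. indicator C x * c \<partial>M) = c * measure M C" for c :: real
    using C by (simp add: sets.Int_space_eq2)
  have "(\<integral>x. indicator C x * a \<partial>M) \<le> (\<integral>x. indicator C x * f x \<partial>M)"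
    by (rule integral_mono[OF intC int]) (use lo in \<open>auto simp: indicator_def\<close>)
  then show "a * measure M C \<le> (\<integral>x. indicator C x * f x \<partial>M)" unfolding eqc .
  have "(\<integral>x. indicator C x * f x \<partial>M) \<le> (\<integral>x. indicator C x * b \<partial>M)"
    by (rule integral_mono[OF int intC]) (use hi in \<open>auto simp: indicator_def\<close>)
  then show "(\<integral>x. indicator C x * f x \<partial>M) \<le> b * measure M C" unfolding eqc .
qed

lemma topspace_prod_top[simp]: "topspace prod_top = UNIV"
  by (simp add: prod_top_def PiE_def extensional_def)

lemma cont_extract:
  fixes F :: "(int^'d \<Rightarrow> 'e) \<Rightarrow> real"
  assumes lim: "limitin euclideanreal F (F \<eta>) (atin prod_top \<eta>)" and e: "\<epsilon> > 0"
  shows "\<exists>K. finite K \<and> (\<forall>\<omega>. (\<forall>x\<in>K. \<omega> x = \<eta> x) \<longrightarrow> \<bar>F \<omega> - F \<eta>\<bar> < \<epsilon>)"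
proof -
  define U where "U = ball (F \<eta>) \<epsilon>"
  have U: "openin euclideanreal U" "F \<eta> \<in> U" using e by (auto simp: U_def)
  have "eventually (\<lambda>\<omega>. F \<omega> \<in> U) (atin prod_top \<eta>)"
    using lim U unfolding limitin_def by blast
  then obtain V where V: "openin prod_top V" "\<eta> \<in> V" "\<And>\<omega>. \<omega> \<in> V - {\<eta>} \<Longrightarrow> F \<omega> \<in> U"
    unfolding eventually_atin by auto
  then obtain W where W: "finite {i \<in> UNIV. W i \<noteq> topspace (discrete_topology UNIV)}"
      "\<eta> \<in> PiE UNIV W" "PiE UNIV W \<subseteq> V"
    unfolding prod_top_def openin_product_topology_alt by blast
  define K where "K = {i. W i \<noteq> UNIV}"
  have K: "finite K" using W(1) by (simp add: K_def)
  have "\<bar>F \<omega> - F \<eta>\<bar> < \<epsilon>" if om: "\<forall>x\<in>K. \<omega> x = \<eta> x" for \<omega>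
  proof -
    have "\<omega> \<in> PiE UNIV W"
    proof -
      have "\<omega> i \<in> W i" for i
      proof (cases "i \<in> K")
        case True then show ?thesis using om W(2) by (auto simp: PiE_def Pi_def)
      next
        case False then show ?thesis by (simp add: K_def)
      qed
      then show ?thesis by (auto simp: PiE_def extensional_def)
    qed
    then have "\<omega> \<in> V" using W(3) by blast
    show ?thesis
    proof (cases "\<omega> = \<eta>")
      case True then show ?thesis using e by simp
    next
      case False
      then have "F \<omega> \<in> U" using V(3) \<open>\<omega> \<in> V\<close> by blast
      then show ?thesis by (simp add: U_def dist_real_def abs_minus_commute)
    qed
  qed
  then show ?thesis using K by blast
qed

definition glue' :: "(int^('d::{finite,linorder}) \<Rightarrow> 'e) \<Rightarrow> (int^('d::{finite,linorder}) \<Rightarrow> 'e) \<Rightarrow> (int^('d::{finite,linorder}) \<Rightarrow> 'e)" where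
  "glue' \<sigma> \<xi> = (\<lambda>x. if lex_le x 0 \<and> x \<noteq> 0 then \<sigma> x else \<xi> x)"

definition Gd :: "(int^('d::{finite,linorder}) \<Rightarrow> 'e) measure \<Rightarrow> (int^('d::{finite,linorder})) set \<Rightarrow> (int^('d::{finite,linorder}) \<Rightarrow> 'e) \<times> (int^('d::{finite,linorder}) \<Rightarrow> 'e) \<Rightarrow> real" where
  "Gd \<nu> \<Delta> p = ln (measure \<nu> (cyl \<Delta> (glue (snd p) (fst p)))) - ln (measure \<nu> (cyl \<Delta> (glue' (snd p) (fst p))))"

definition Gl :: "((int^('d::{finite,linorder})) set \<Rightarrow> (int^('d::{finite,linorder}) \<Rightarrow> 'e) \<Rightarrow> (int^('d::{finite,linorder}) \<Rightarrow> 'e) measure) \<Rightarrow> (int^('d::{finite,linorder}) \<Rightarrow> 'e) \<times> (int^('d::{finite,linorder}) \<Rightarrow> 'e) \<Rightarrow> real" where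
  "Gl \<gamma> p = ln (gam0 \<gamma> (snd p 0) (glue (snd p) (fst p))) - ln (gam0 \<gamma> (fst p 0) (glue (snd p) (fst p)))"

lemma glue_0[simp]: "glue \<sigma> \<xi> 0 = \<sigma> 0"
  by (simp add: glue_def)

lemma glue'_0[simp]: "glue' \<sigma> \<xi> 0 = \<xi> 0"
  by (simp add: glue'_def)

lemma glue'_off0: "x \<noteq> 0 \<Longrightarrow> glue' \<sigma> \<xi> x = glue \<sigma> \<xi> x"
  by (simp add: glue_def glue'_def)

lemma cyl_cong: "(\<And>x. x \<in> \<Lambda> \<Longrightarrow> \<eta> x = \<eta>' x) \<Longrightarrow> cyl \<Lambda> \<eta> = cyl \<Lambda> \<eta>'"
  by (auto simp: cyl_def)

lemma glue_meas: "(\<lambda>p. glue (snd p) (fst p)) \<in> measurable (Omega \<Otimes>\<^sub>M Omega) (Omega :: (int^('d::{finite,linorder}) \<Rightarrow> 'e) measure)"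
proof (rule meas_into_Omega)
  fix x :: "int^('d::{finite,linorder})"
  show "(\<lambda>p. glue (snd p) (fst p) x) \<in> measurable (Omega \<Otimes>\<^sub>M Omega) (count_space UNIV)"
  proof (cases "lex_le x 0")
    case True
    then show ?thesis unfolding glue_def using measurable_compose[OF measurable_snd meas_coord] by simp
  next
    case False
    then show ?thesis unfolding glue_def using measurable_compose[OF measurable_fst meas_coord] by simp
  qed
qed

lemma lex_max:
  assumes "finite A" "A \<noteq> {}"
  shows "\<exists>m\<in>A. \<forall>y\<in>A. lex_le y m"
  using assms
proof (induction A rule: finite_ne_induct)
  case (singleton x) then show ?case by simp
next
  case (insert x F)
  then obtain m where m: "m \<in> F" "\<forall>y\<in>F. lex_le y m" by blast
  show ?case
  proof (cases "lex_le m x")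
    case True
    have "\<forall>y\<in>insert x F. lex_le y x"
    proof
      fix y assume "y \<in> insert x F"
      then show "lex_le y x"
      proof
        assume "y \<in> F"
        then have "lex_le y m" using m(2) by blast
        then show "lex_le y x" using True by (rule lex_le_trans)
      qed simp
    qed
    then show ?thesis by blast
  next
    case False
    then have "lex_le x m" using lex_le_total by blast
    then have "\<forall>y\<in>insert x F. lex_le y m" using m(2) by simp
    then show ?thesis using m(1) by blast
  qed
qed

lemma telescope:
  fixes G :: "(int^('d::{finite,linorder})) set \<Rightarrow> real"
  assumes "finite \<Lambda>"
  shows "(\<Sum>x\<in>\<Lambda>. G {y\<in>\<Lambda>. lex_le y x} - G {y\<in>\<Lambda>. lex_le y x \<and> y \<noteq> x}) = G \<Lambda> - G {}"
  using assms
proof (induction "card \<Lambda>" arbitrary: \<Lambda>)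
  case 0
  then have "\<Lambda> = {}" by simp
  then show ?case by simp
next
  case (Suc n)
  then have ne: "\<Lambda> \<noteq> {}" by auto
  obtain m where m: "m \<in> \<Lambda>" "\<forall>y\<in>\<Lambda>. lex_le y m" using lex_max[OF Suc.prems ne] by blast
  define L where "L = \<Lambda> - {m}"
  have L: "finite L" "card L = n" using Suc by (auto simp: L_def m(1))
  have IH: "(\<Sum>x\<in>L. G {y\<in>L. lex_le y x} - G {y\<in>L. lex_le y x \<and> y \<noteq> x}) = G L - G {}"
    using Suc.hyps(1)[of L] L by simp
  have s1: "{y\<in>\<Lambda>. lex_le y x} = {y\<in>L. lex_le y x}" if "x \<in> L" for x
  proof -
    have xm: "x \<in> \<Lambda>" "x \<noteq> m" using that by (auto simp: L_def)
    have "\<not> lex_le m x"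
    proof
      assume "lex_le m x"
      moreover have "lex_le x m" using m(2) xm(1) by blast
      ultimately have "m = x" by (rule lex_le_antisym)
      then show False using xm(2) by simp
    qed
    then show ?thesis by (auto simp: L_def)
  qed
  have s2: "{y\<in>\<Lambda>. lex_le y x \<and> y \<noteq> x} = {y\<in>L. lex_le y x \<and> y \<noteq> x}" if "x \<in> L" for x
  proof -
    have xm: "x \<in> \<Lambda>" "x \<noteq> m" using that by (auto simp: L_def)
    have "\<not> lex_le m x"
    proof
      assume "lex_le m x"
      moreover have "lex_le x m" using m(2) xm(1) by blast
      ultimately have "m = x" by (rule lex_le_antisym)
      then show False using xm(2) by simp
    qed
    then show ?thesis by (auto simp: L_def)
  qed
  have s3: "{y\<in>\<Lambda>. lex_le y m} = \<Lambda>" using m by auto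
  have s4: "{y\<in>\<Lambda>. lex_le y m \<and> y \<noteq> m} = L" using m by (auto simp: L_def)
  have "(\<Sum>x\<in>\<Lambda>. G {y\<in>\<Lambda>. lex_le y x} - G {y\<in>\<Lambda>. lex_le y x \<and> y \<noteq> x}) =
      (G {y\<in>\<Lambda>. lex_le y m} - G {y\<in>\<Lambda>. lex_le y m \<and> y \<noteq> m}) + (\<Sum>x\<in>L. G {y\<in>\<Lambda>. lex_le y x} - G {y\<in>\<Lambda>. lex_le y x \<and> y \<noteq> x})"
    unfolding L_def by (rule sum.remove[OF Suc.prems m(1)])
  also have "(\<Sum>x\<in>L. G {y\<in>\<Lambda>. lex_le y x} - G {y\<in>\<Lambda>. lex_le y x \<and> y \<noteq> x}) = (\<Sum>x\<in>L. G {y\<in>L. lex_le y x} - G {y\<in>L. lex_le y x \<and> y \<noteq> x})"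
    using s1 s2 by (intro sum.cong) auto
  finally show ?case unfolding s3 s4 IH by simp
qed

locale gs =
  fixes \<gamma> :: "(int^('d::{finite,linorder})) set \<Rightarrow> (int^('d::{finite,linorder}) \<Rightarrow> 'e::finite) \<Rightarrow> (int^('d::{finite,linorder}) \<Rightarrow> 'e::finite) measure"
    and \<nu> :: "(int^('d::{finite,linorder}) \<Rightarrow> 'e::finite) measure"
  assumes spec: "is_specification \<gamma>" and nonnull: "nonnull_spec \<gamma>"
    and nu_gibbs: "gibbs \<gamma> \<nu>" and nu_inv: "inv_measure \<nu>"
begin

lemma pm: "prob_on_Omega \<nu>"
  using nu_inv by (simp add: inv_measure_def)

lemma ps: "prob_space \<nu>"
  using pm by (rule pOm_ps)

lemma sets_nu: "sets \<nu> = sets Omega"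
  using pm by (simp add: prob_on_Omega_def)

lemma space_nu[simp]: "space \<nu> = UNIV"
  using pm by (rule pOm_space)

lemma spec1: "\<forall>\<Lambda> \<omega>. finite \<Lambda> \<and> \<Lambda> \<noteq> {} \<longrightarrow> prob_on_Omega (\<gamma> \<Lambda> \<omega>)"
  using spec unfolding is_specification_def by (elim conjE)

lemma spec2: "\<forall>\<Lambda> A. finite \<Lambda> \<and> \<Lambda> \<noteq> {} \<and> A \<in> sets Omega \<longrightarrow>
        (\<lambda>\<omega>. measure (\<gamma> \<Lambda> \<omega>) A) \<in> borel_measurable (Fsig (- \<Lambda>))"
  using spec unfolding is_specification_def by (elim conjE)

lemma gam_pm: "finite \<Lambda> \<Longrightarrow> \<Lambda> \<noteq> {} \<Longrightarrow> prob_on_Omega (\<gamma> \<Lambda> \<omega>)"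
  using spec1 by simp

lemma gam_ps: "finite \<Lambda> \<Longrightarrow> \<Lambda> \<noteq> {} \<Longrightarrow> prob_space (\<gamma> \<Lambda> \<omega>)"
  using gam_pm by (simp add: prob_on_Omega_def)

lemma gam_sets: "finite \<Lambda> \<Longrightarrow> \<Lambda> \<noteq> {} \<Longrightarrow> sets (\<gamma> \<Lambda> \<omega>) = sets Omega"
  using gam_pm by (simp add: prob_on_Omega_def)

lemma gam_meas_F:
  "finite \<Lambda> \<Longrightarrow> \<Lambda> \<noteq> {} \<Longrightarrow> A \<in> sets Omega \<Longrightarrow> (\<lambda>\<omega>. measure (\<gamma> \<Lambda> \<omega>) A) \<in> borel_measurable (Fsig (- \<Lambda>))"
  using spec2 by simp

lemma gam_meas:
  "finite \<Lambda> \<Longrightarrow> \<Lambda> \<noteq> {} \<Longrightarrow> A \<in> sets Omega \<Longrightarrow> (\<lambda>\<omega>. measure (\<gamma> \<Lambda> \<omega>) A) \<in> borel_measurable Omega"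
  by (rule meas_Fsig_Omega) (rule gam_meas_F)

lemma gibbs_int:
  assumes L: "finite \<Lambda>" "\<Lambda> \<noteq> {}" and A: "A \<in> sets Omega" and C: "C \<in> sets (Fsig (- \<Lambda>))"
  shows "measure \<nu> (C \<inter> A) = (\<integral>\<omega>. indicator C \<omega> * measure (\<gamma> \<Lambda> \<omega>) A \<partial>\<nu>)"
proof -
  interpret prob_space \<nu> by (rule ps)
  have sub: "subalgebra \<nu> (Fsig (- \<Lambda>))" by (rule subalg_Fsig[OF sets_nu])
  interpret finite_measure_subalgebra \<nu> "Fsig (- \<Lambda>)"
    by unfold_locales (rule sub)
  have Cs: "C \<in> sets \<nu>" using C sets_Fsig_sub sets_nu by blast
  have As: "A \<in> sets \<nu>" using A sets_nu by simp
  have ae: "AE \<omega> in \<nu>. real_cond_exp \<nu> (Fsig (- \<Lambda>)) (indicator A) \<omega> = measure (\<gamma> \<Lambda> \<omega>) A"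
  proof -
    have "\<forall>\<Lambda> A. finite \<Lambda> \<and> \<Lambda> \<noteq> {} \<and> A \<in> sets Omega \<longrightarrow>
      (AE \<omega> in \<nu>. real_cond_exp \<nu> (Fsig (- \<Lambda>)) (indicator A) \<omega> = measure (\<gamma> \<Lambda> \<omega>) A)"
      using nu_gibbs unfolding gibbs_def by (elim conjE)
    then show ?thesis using L A by simp
  qed
  have int: "integrable \<nu> (\<lambda>x. indicator C x * indicator A x :: real)"
  proof -
    have "integrable \<nu> (indicator (C \<inter> A) :: _ \<Rightarrow> real)"
      using Cs As by (intro integrable_real_indicator) (auto simp: emeasure_eq_measure)
    moreover have "(\<lambda>x. indicator C x * indicator A x) = (indicator (C \<inter> A) :: _ \<Rightarrow> real)"
      by (auto simp: indicator_def fun_eq_iff)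
    ultimately show ?thesis by simp
  qed
  have "(\<integral>x. indicator C x * real_cond_exp \<nu> (Fsig (- \<Lambda>)) (indicator A) x \<partial>\<nu>) = (\<integral>x. indicator C x * indicator A x \<partial>\<nu>)"
    by (rule real_cond_exp_intg(2)[OF int]) (use C As in auto)
  also have "\<dots> = measure \<nu> (C \<inter> A)"
    unfolding indicator_inter_arith[symmetric] using Cs As by simp
  finally have e1: "(\<integral>x. indicator C x * real_cond_exp \<nu> (Fsig (- \<Lambda>)) (indicator A) x \<partial>\<nu>) = measure \<nu> (C \<inter> A)" .
  have "(\<integral>x. indicator C x * real_cond_exp \<nu> (Fsig (- \<Lambda>)) (indicator A) x \<partial>\<nu>) = (\<integral>\<omega>. indicator C \<omega> * measure (\<gamma> \<Lambda> \<omega>) A \<partial>\<nu>)"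
  proof (rule integral_cong_AE)
    show "(\<lambda>x. indicator C x * real_cond_exp \<nu> (Fsig (- \<Lambda>)) (indicator A) x) \<in> borel_measurable \<nu>"
      using Cs by measurable
    show "(\<lambda>\<omega>. indicator C \<omega> * measure (\<gamma> \<Lambda> \<omega>) A) \<in> borel_measurable \<nu>"
      using Cs pOm_meas[OF pm gam_meas[OF L A]] by measurable
    show "AE x in \<nu>. indicator C x * real_cond_exp \<nu> (Fsig (- \<Lambda>)) (indicator A) x = indicator C x * measure (\<gamma> \<Lambda> x) A"
      using ae by eventually_elim simp
  qed
  then show ?thesis using e1 by simp
qed

lemma nonnull_lb:
  assumes "finite \<Lambda>" "\<Lambda> \<noteq> {}"
  shows "\<exists>a>0. \<forall>\<sigma> \<eta>. a < measure (\<gamma> \<Lambda> \<eta>) (cyl \<Lambda> \<sigma>)"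
proof -
  have "\<forall>\<Lambda>. finite \<Lambda> \<and> \<Lambda> \<noteq> {} \<longrightarrow>
      (\<exists>a b. 0 < a \<and> b < 1 \<and>
        a < (INF p. measure (\<gamma> \<Lambda> (snd p)) (cyl \<Lambda> (fst p))) \<and>
        (SUP p. measure (\<gamma> \<Lambda> (snd p)) (cyl \<Lambda> (fst p))) < b)"
    using nonnull unfolding nonnull_spec_def .
  then obtain a where a: "0 < a" "a < (INF p. measure (\<gamma> \<Lambda> (snd p)) (cyl \<Lambda> (fst p)))"
    using assms by blast
  have bdd: "bdd_below (range (\<lambda>p. measure (\<gamma> \<Lambda> (snd p)) (cyl \<Lambda> (fst p))))"
    by (intro bdd_belowI[of _ 0]) auto
  have "a < measure (\<gamma> \<Lambda> \<eta>) (cyl \<Lambda> \<sigma>)" for \<sigma> \<eta>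
  proof -
    have "(INF p. measure (\<gamma> \<Lambda> (snd p)) (cyl \<Lambda> (fst p))) \<le> measure (\<gamma> \<Lambda> (snd (\<sigma>, \<eta>))) (cyl \<Lambda> (fst (\<sigma>, \<eta>)))"
      by (rule cINF_lower[OF bdd]) simp
    then show ?thesis using a by simp
  qed
  then show ?thesis using a by blast
qed

lemma nu_cyl_lb:
  assumes "finite \<Lambda>"
  shows "\<exists>a>0. \<forall>s. a \<le> measure \<nu> (cyl \<Lambda> s)"
proof (cases "\<Lambda> = {}")
  case True
  then have "cyl \<Lambda> s = space \<nu>" for s by (simp add: cyl_def)
  then show ?thesis using prob_space.prob_space[OF ps] by (intro exI[of _ 1]) simp
next
  case False
  obtain a where a: "a > 0" "\<And>\<sigma> \<eta>. a < measure (\<gamma> \<Lambda> \<eta>) (cyl \<Lambda> \<sigma>)"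
    using nonnull_lb[OF assms False] by blast
  have "a \<le> measure \<nu> (cyl \<Lambda> s)" for s
  proof -
    have U: "UNIV \<in> sets (Fsig (- \<Lambda>))" using sets.top[of "Fsig (- \<Lambda>)"] by simp
    have "measure \<nu> (UNIV \<inter> cyl \<Lambda> s) = (\<integral>\<omega>. indicator UNIV \<omega> * measure (\<gamma> \<Lambda> \<omega>) (cyl \<Lambda> s) \<partial>\<nu>)"
      by (rule gibbs_int[OF assms False cyl_Omega[OF assms] U])
    moreover have "a * measure \<nu> UNIV \<le> (\<integral>\<omega>. indicator UNIV \<omega> * measure (\<gamma> \<Lambda> \<omega>) (cyl \<Lambda> s) \<partial>\<nu>)"
      by (rule int_bounds(1)[OF ps _ _, where b=1])
         (use a pOm_meas[OF pm gam_meas[OF assms False cyl_Omega[OF assms]]] sets.top[of \<nu>]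
              prob_space.prob_le_1[OF gam_ps[OF assms False]] in \<open>auto simp: less_imp_le\<close>)
    moreover have "measure \<nu> UNIV = 1" using prob_space.prob_space[OF ps] by simp
    ultimately show ?thesis by simp
  qed
  then show ?thesis using a by blast
qed

lemma nu_cyl_pos: "finite \<Lambda> \<Longrightarrow> 0 < measure \<nu> (cyl \<Lambda> s)"
  using nu_cyl_lb by (meson less_le_trans)

definition a0 where "a0 = (SOME a. a > 0 \<and> (\<forall>\<sigma> \<eta>. a < measure (\<gamma> {0} \<eta>) (cyl {0} \<sigma>)))"

lemma a0: "a0 > 0" "\<And>\<sigma> \<eta>. a0 < measure (\<gamma> {0} \<eta>) (cyl {0} \<sigma>)"
proof -
  have "\<exists>a. a > 0 \<and> (\<forall>\<sigma> \<eta>. a < measure (\<gamma> {0} \<eta>) (cyl {0} \<sigma>))"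
    using nonnull_lb[of "{0}"] by simp
  then have "a0 > 0 \<and> (\<forall>\<sigma> \<eta>. a0 < measure (\<gamma> {0} \<eta>) (cyl {0} \<sigma>))"
    unfolding a0_def by (rule someI_ex)
  then show "a0 > 0" "\<And>\<sigma> \<eta>. a0 < measure (\<gamma> {0} \<eta>) (cyl {0} \<sigma>)" by auto
qed

lemma gam0_lb: "a0 < gam0 \<gamma> a \<omega>"
  using a0(2)[where \<sigma>="\<lambda>_. a" and \<eta>=\<omega>] by (simp add: gam0_def cyl0)

lemma gam0_pos: "0 < gam0 \<gamma> a \<omega>"
  using gam0_lb a0(1) by (meson less_trans)

lemma gam0_le1: "gam0 \<gamma> a \<omega> \<le> 1"
  unfolding gam0_def by (rule prob_space.prob_le_1[OF gam_ps]) auto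

lemma a0_le1: "a0 \<le> 1"
  using gam0_lb[of undefined undefined] gam0_le1[of undefined undefined] by simp

lemma A0_sets: "{\<omega>. \<omega> 0 = a} \<in> sets Omega"
  unfolding cyl0 by (rule cyl_Omega) simp

lemma gam0_meas_F: "(\<lambda>\<omega>. gam0 \<gamma> a \<omega>) \<in> borel_measurable (Fsig (- {0}))"
  unfolding gam0_def by (rule gam_meas_F[OF _ _ A0_sets]) auto

lemma gam0_meas: "(\<lambda>\<omega>. gam0 \<gamma> a \<omega>) \<in> borel_measurable Omega"
  by (rule meas_Fsig_Omega[OF gam0_meas_F])

lemma gam0_dep: "(\<forall>x. x \<noteq> 0 \<longrightarrow> \<omega> x = \<omega>' x) \<Longrightarrow> gam0 \<gamma> a \<omega> = gam0 \<gamma> a \<omega>'"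
  by (rule Fsig_dep[OF gam0_meas_F]) auto

lemma nu_cyl_int:
  assumes D: "finite \<Delta>" "0 \<in> \<Delta>"
  shows "measure \<nu> (cyl \<Delta> \<eta>) = (\<integral>\<omega>. indicator (cyl (\<Delta> - {0}) \<eta>) \<omega> * gam0 \<gamma> (\<eta> 0) \<omega> \<partial>\<nu>)"
proof -
  have C: "cyl (\<Delta> - {0}) \<eta> \<in> sets (Fsig (- {0}))" using D by (intro cyl_Fsig) auto
  show ?thesis unfolding cyl_split0[OF D(2)] gam0_def
    by (rule gibbs_int[OF _ _ A0_sets C]) auto
qed

lemma nu_cyl_bounds:
  assumes D: "finite \<Delta>" "0 \<in> \<Delta>"
  shows "a0 * measure \<nu> (cyl (\<Delta> - {0}) \<eta>) \<le> measure \<nu> (cyl \<Delta> \<eta>)"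
    "measure \<nu> (cyl \<Delta> \<eta>) \<le> measure \<nu> (cyl (\<Delta> - {0}) \<eta>)"
proof -
  have C: "cyl (\<Delta> - {0}) \<eta> \<in> sets \<nu>" using D sets_nu by simp
  have m: "(\<lambda>\<omega>. gam0 \<gamma> (\<eta> 0) \<omega>) \<in> borel_measurable \<nu>" by (rule pOm_meas[OF pm gam0_meas])
  show "a0 * measure \<nu> (cyl (\<Delta> - {0}) \<eta>) \<le> measure \<nu> (cyl \<Delta> \<eta>)"
    unfolding nu_cyl_int[OF D]
    by (rule int_bounds(1)[OF ps m C, where b=1]) (auto intro: less_imp_le gam0_lb gam0_le1)
  show "measure \<nu> (cyl \<Delta> \<eta>) \<le> measure \<nu> (cyl (\<Delta> - {0}) \<eta>)"
    unfolding nu_cyl_int[OF D] using int_bounds(2)[OF ps m C, where a=a0 and b=1]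
    by (auto intro: less_imp_le gam0_lb gam0_le1)
qed

lemma gam0_cont:
  assumes eta: "\<eta> \<in> Omega_gamma \<gamma>"
  shows "limitin euclideanreal (\<lambda>\<omega>. gam0 \<gamma> a \<omega>) (gam0 \<gamma> a \<eta>) (atin prod_top \<eta>)"
proof -
  define f :: "(int^('d::{finite,linorder}) \<Rightarrow> 'e) \<Rightarrow> real" where "f = indicator {\<omega>. \<omega> 0 = a}"
  have lf: "local_fun f"
    unfolding local_fun_def f_def cyl0
    by (intro exI[of _ "{0}"] conjI borel_measurable_indicator cyl_Fsig) auto
  have "\<forall>\<Lambda> f. finite \<Lambda> \<and> \<Lambda> \<noteq> {} \<and> local_fun f \<longrightarrow>
      limitin euclideanreal (\<lambda>\<omega>'. \<integral>z. f z \<partial>(\<gamma> \<Lambda> \<omega>')) (\<integral>z. f z \<partial>(\<gamma> \<Lambda> \<eta>)) (atin prod_top \<eta>)"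
    using eta unfolding Omega_gamma_def by simp
  then have l: "limitin euclideanreal (\<lambda>\<omega>'. \<integral>z. f z \<partial>(\<gamma> {0} \<omega>')) (\<integral>z. f z \<partial>(\<gamma> {0} \<eta>)) (atin prod_top \<eta>)"
    using lf by simp
  have "(\<integral>z. f z \<partial>(\<gamma> {0} \<omega>)) = gam0 \<gamma> a \<omega>" for \<omega>
  proof -
    have sp: "space (\<gamma> {0} \<omega>) = UNIV" using gam_sets[of "{0}" \<omega>] by (metis finite.emptyI finite_insert insert_not_empty sets_eq_imp_space_eq space_Omega)
    show ?thesis unfolding f_def gam0_def by (simp add: sp)
  qed
  then show ?thesis using l by simp
qed

lemma gam0_near:
  assumes eta: "\<eta> \<in> Omega_gamma \<gamma>" and e: "\<epsilon> > 0"
  shows "\<exists>K. finite K \<and> (\<forall>\<omega>. (\<forall>x\<in>K - {0}. \<omega> x = \<eta> x) \<longrightarrow> \<bar>gam0 \<gamma> a \<omega> - gam0 \<gamma> a \<eta>\<bar> < \<epsilon>)"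
proof -
  obtain K where K: "finite K" "\<And>\<omega>. (\<forall>x\<in>K. \<omega> x = \<eta> x) \<Longrightarrow> \<bar>gam0 \<gamma> a \<omega> - gam0 \<gamma> a \<eta>\<bar> < \<epsilon>"
    using cont_extract[OF gam0_cont[OF eta] e] by blast
  have "\<bar>gam0 \<gamma> a \<omega> - gam0 \<gamma> a \<eta>\<bar> < \<epsilon>" if "\<forall>x\<in>K - {0}. \<omega> x = \<eta> x" for \<omega>
  proof -
    have "gam0 \<gamma> a \<omega> = gam0 \<gamma> a (fun_upd \<omega> 0 (\<eta> 0))" by (rule gam0_dep) auto
    moreover have "\<bar>gam0 \<gamma> a (fun_upd \<omega> 0 (\<eta> 0)) - gam0 \<gamma> a \<eta>\<bar> < \<epsilon>" using that by (intro K(2)) auto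
    ultimately show ?thesis by simp
  qed
  then show ?thesis using K(1) by blast
qed

lemma ratio_conv:
  assumes eta: "\<eta> \<in> Omega_gamma \<gamma>" and Dfin: "\<And>j. finite (\<Delta> j)" and DL: "\<And>j. Lam j \<subseteq> \<Delta> j"
  shows "(\<lambda>j. measure \<nu> (cyl (\<Delta> j - {0}) \<eta> \<inter> {\<omega>. \<omega> 0 = a}) / measure \<nu> (cyl (\<Delta> j - {0}) \<eta>)) \<longlonglongrightarrow> gam0 \<gamma> a \<eta>"
proof (rule LIMSEQ_I)
  fix r :: real assume r: "0 < r"
  then obtain K where K: "finite K" "\<And>\<omega>. (\<forall>x\<in>K - {0}. \<omega> x = \<eta> x) \<Longrightarrow> \<bar>gam0 \<gamma> a \<omega> - gam0 \<gamma> a \<eta>\<bar> < r / 2"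
    using gam0_near[OF eta, where \<epsilon>="r/2" and a=a] r by auto
  obtain N where N: "K \<subseteq> Lam N" using finite_in_Lam[OF K(1)] by blast
  show "\<exists>no. \<forall>j\<ge>no. norm (measure \<nu> (cyl (\<Delta> j - {0}) \<eta> \<inter> {\<omega>. \<omega> 0 = a}) / measure \<nu> (cyl (\<Delta> j - {0}) \<eta>) - gam0 \<gamma> a \<eta>) < r"
  proof (intro exI allI impI)
    fix j assume j: "N \<le> j"
    define C where "C = cyl (\<Delta> j - {0}) \<eta>"
    define g where "g = gam0 \<gamma> a \<eta>"
    have KD: "K \<subseteq> \<Delta> j" using N Lam_mono[OF j] DL[of j] by blast
    have Cs: "C \<in> sets (Fsig (- {0}))" unfolding C_def using Dfin by (intro cyl_Fsig) auto
    have Cn: "C \<in> sets \<nu>" using Cs sets_Fsig_sub sets_nu by blast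
    have Cpos: "measure \<nu> C > 0" unfolding C_def using Dfin by (intro nu_cyl_pos) auto
    have near: "\<bar>gam0 \<gamma> a \<omega> - g\<bar> < r / 2" if "\<omega> \<in> C" for \<omega>
      unfolding g_def using that KD by (intro K(2)) (auto simp: C_def cyl_def)
    have eq: "measure \<nu> (C \<inter> {\<omega>. \<omega> 0 = a}) = (\<integral>\<omega>. indicator C \<omega> * gam0 \<gamma> a \<omega> \<partial>\<nu>)"
      unfolding gam0_def by (rule gibbs_int[OF _ _ A0_sets Cs]) auto
    have m: "(\<lambda>\<omega>. gam0 \<gamma> a \<omega>) \<in> borel_measurable \<nu>" by (rule pOm_meas[OF pm gam0_meas])
    have near2: "g - r/2 \<le> gam0 \<gamma> a \<omega> \<and> gam0 \<gamma> a \<omega> \<le> g + r/2" if "\<omega> \<in> C" for \<omega>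
      using near[OF that] unfolding abs_less_iff by linarith
    have lo: "(g - r/2) * measure \<nu> C \<le> measure \<nu> (C \<inter> {\<omega>. \<omega> 0 = a})"
      unfolding eq by (rule int_bounds(1)[OF ps m Cn, where b="g + r/2"]) (use near2 in auto)
    have hi: "measure \<nu> (C \<inter> {\<omega>. \<omega> 0 = a}) \<le> (g + r/2) * measure \<nu> C"
      unfolding eq by (rule int_bounds(2)[OF ps m Cn, where a="g - r/2"]) (use near2 in auto)
    have "g - r/2 \<le> measure \<nu> (C \<inter> {\<omega>. \<omega> 0 = a}) / measure \<nu> C"
      using lo Cpos by (simp add: pos_le_divide_eq)
    moreover have "measure \<nu> (C \<inter> {\<omega>. \<omega> 0 = a}) / measure \<nu> C \<le> g + r/2"
      using hi Cpos by (simp add: pos_divide_le_eq)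
    ultimately show "norm (measure \<nu> (cyl (\<Delta> j - {0}) \<eta> \<inter> {\<omega>. \<omega> 0 = a}) / measure \<nu> (cyl (\<Delta> j - {0}) \<eta>) - gam0 \<gamma> a \<eta>) < r"
      using r unfolding C_def[symmetric] g_def[symmetric] by simp
  qed
qed

lemma nu_cyl_shift:
  assumes L: "finite \<Lambda>"
  shows "measure \<nu> (cyl \<Lambda> \<eta>) = measure \<nu> (cyl ((\<lambda>y. y - x) ` \<Lambda>) (shift x \<eta>))"
proof -
  have d: "distr \<nu> Omega (shift x) = \<nu>" using nu_inv by (simp add: inv_measure_def)
  have A: "cyl ((\<lambda>y. y - x) ` \<Lambda>) (shift x \<eta>) \<in> sets Omega" using L by (intro cyl_Omega) simp
  have "measure \<nu> (cyl ((\<lambda>y. y - x) ` \<Lambda>) (shift x \<eta>)) = measure (distr \<nu> Omega (shift x)) (cyl ((\<lambda>y. y - x) ` \<Lambda>) (shift x \<eta>))"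
    using d by simp
  also have "\<dots> = measure \<nu> (shift x -` cyl ((\<lambda>y. y - x) ` \<Lambda>) (shift x \<eta>) \<inter> space \<nu>)"
    by (rule measure_distr[OF pOm_meas[OF pm shift_meas] A])
  also have "shift x -` cyl ((\<lambda>y. y - x) ` \<Lambda>) (shift x \<eta>) \<inter> space \<nu> = cyl \<Lambda> \<eta>"
  proof -
    have "(\<forall>y\<in>(\<lambda>y. y - x) ` \<Lambda>. \<omega> (x + y) = \<eta> (x + y)) \<longleftrightarrow> (\<forall>z\<in>\<Lambda>. \<omega> z = \<eta> z)" for \<omega>
      by auto
    then show ?thesis by (auto simp: cyl_def shift_def)
  qed
  finally show ?thesis by simp
qed

lemma shift_mixle: "shift x (\<lambda>y. if lex_le y x then \<sigma> y else \<xi> y) = glue (shift x \<sigma>) (shift x \<xi>)"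
proof -
  have "lex_le (x + y) x \<longleftrightarrow> lex_le y 0" for y
    using lex_le_shift[of y x 0] by (simp add: add.commute)
  then show ?thesis by (auto simp: shift_def glue_def fun_eq_iff)
qed

lemma shift_mixlt: "shift x (\<lambda>y. if lex_le y x \<and> y \<noteq> x then \<sigma> y else \<xi> y) = glue' (shift x \<sigma>) (shift x \<xi>)"
proof -
  have "lex_le (x + y) x \<longleftrightarrow> lex_le y 0" for y
    using lex_le_shift[of y x 0] by (simp add: add.commute)
  then show ?thesis by (auto simp: shift_def glue'_def fun_eq_iff)
qed

lemma gam0_nz: "gam0 \<gamma> a \<omega> \<noteq> 0"
  using gam0_pos[of a \<omega>] by simp

lemma Gd_conv:
  assumes eta: "glue \<sigma> \<xi> \<in> Omega_gamma \<gamma>" and Dfin: "\<And>j. finite (\<Delta> j)" and DL: "\<And>j. Lam j \<subseteq> \<Delta> j"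
  shows "(\<lambda>j. Gd \<nu> (\<Delta> j) (\<xi>, \<sigma>)) \<longlonglongrightarrow> Gl \<gamma> (\<xi>, \<sigma>)"
proof -
  define \<eta> where "\<eta> = glue \<sigma> \<xi>"
  define C where "C j = cyl (\<Delta> j - {0}) \<eta>" for j
  define R where "R a j = measure \<nu> (C j \<inter> {\<omega>. \<omega> 0 = a}) / measure \<nu> (C j)" for a j
  have z: "0 \<in> \<Delta> j" for j using DL[of j] zero_Lam by blast
  have e1: "cyl (\<Delta> j) (glue \<sigma> \<xi>) = C j \<inter> {\<omega>. \<omega> 0 = \<sigma> 0}" for j
    unfolding C_def \<eta>_def using cyl_split0[OF z[of j], of "glue \<sigma> \<xi>"] by simp
  have e2: "cyl (\<Delta> j) (glue' \<sigma> \<xi>) = C j \<inter> {\<omega>. \<omega> 0 = \<xi> 0}" for j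
  proof -
    have "cyl (\<Delta> j - {0}) (glue' \<sigma> \<xi>) = cyl (\<Delta> j - {0}) (glue \<sigma> \<xi>)"
      by (rule cyl_cong) (simp add: glue'_off0)
    then show ?thesis unfolding C_def \<eta>_def using cyl_split0[OF z[of j], of "glue' \<sigma> \<xi>"] by simp
  qed
  have Cpos: "measure \<nu> (C j) > 0" for j unfolding C_def using Dfin by (intro nu_cyl_pos) auto
  have p1: "measure \<nu> (C j \<inter> {\<omega>. \<omega> 0 = \<sigma> 0}) > 0" for j unfolding e1[symmetric] using Dfin by (intro nu_cyl_pos)
  have p2: "measure \<nu> (C j \<inter> {\<omega>. \<omega> 0 = \<xi> 0}) > 0" for j unfolding e2[symmetric] using Dfin by (intro nu_cyl_pos)
  have G: "Gd \<nu> (\<Delta> j) (\<xi>, \<sigma>) = ln (R (\<sigma> 0) j) - ln (R (\<xi> 0) j)" for j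
    unfolding Gd_def R_def using e1 e2 Cpos[of j] p1[of j] p2[of j] by (simp add: ln_div)
  have "(\<lambda>j. ln (R (\<sigma> 0) j) - ln (R (\<xi> 0) j)) \<longlonglongrightarrow> ln (gam0 \<gamma> (\<sigma> 0) \<eta>) - ln (gam0 \<gamma> (\<xi> 0) \<eta>)"
    unfolding R_def C_def
    by (intro tendsto_diff tendsto_ln ratio_conv[OF eta[folded \<eta>_def] Dfin DL])
       (simp_all add: gam0_nz)
  then show ?thesis unfolding G Gl_def \<eta>_def by simp
qed

lemma ln_diff_bound:
  fixes a c x y :: real
  assumes "0 < a" "a * c \<le> x" "x \<le> c" "a * c \<le> y" "y \<le> c" and c: "0 < c"
  shows "\<bar>ln x - ln y\<bar> \<le> - ln a"
proof -
  have ac: "a * c > 0" using assms(1) c by (rule mult_pos_pos)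
  have x: "x > 0" and y: "y > 0" using assms ac by linarith+
  have "ln x \<le> ln c" "ln y \<le> ln c" using assms x y by simp_all
  moreover have "ln (a * c) \<le> ln x" "ln (a * c) \<le> ln y" using assms x y c by simp_all
  moreover have "ln (a * c) = ln a + ln c" using assms c by (simp add: ln_mult)
  ultimately show ?thesis by linarith
qed

lemma Gd_bound:
  assumes D: "finite \<Delta>" "0 \<in> \<Delta>"
  shows "\<bar>Gd \<nu> \<Delta> p\<bar> \<le> - ln a0"
proof -
  define c where "c = measure \<nu> (cyl (\<Delta> - {0}) (glue (snd p) (fst p)))"
  have cc: "cyl (\<Delta> - {0}) (glue' (snd p) (fst p)) = cyl (\<Delta> - {0}) (glue (snd p) (fst p))"
    by (rule cyl_cong) (simp add: glue'_off0)
  have cpos: "c > 0" unfolding c_def using D by (intro nu_cyl_pos) auto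
  show ?thesis unfolding Gd_def
    by (rule ln_diff_bound[OF a0(1), where c=c])
       (use nu_cyl_bounds[OF D, of "glue (snd p) (fst p)"] nu_cyl_bounds[OF D, of "glue' (snd p) (fst p)"] cc cpos
        in \<open>simp_all add: c_def\<close>)
qed

lemma Gl_bound: "\<bar>Gl \<gamma> p\<bar> \<le> - ln a0"
  unfolding Gl_def
  by (rule ln_diff_bound[OF a0(1), where c=1]) (auto intro: less_imp_le gam0_lb gam0_le1)

lemma Gd_meas:
  assumes "finite \<Delta>"
  shows "Gd \<nu> \<Delta> \<in> borel_measurable (Omega \<Otimes>\<^sub>M Omega)"
proof (rule dep_borel2[OF assms])
  fix p p' :: "(int^('d::{finite,linorder}) \<Rightarrow> 'e) \<times> (int^('d::{finite,linorder}) \<Rightarrow> 'e)"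
  assume a: "\<forall>x\<in>\<Delta>. fst p x = fst p' x \<and> snd p x = snd p' x"
  have "cyl \<Delta> (glue (snd p) (fst p)) = cyl \<Delta> (glue (snd p') (fst p'))"
    using a by (intro cyl_cong) (simp add: glue_def)
  moreover have "cyl \<Delta> (glue' (snd p) (fst p)) = cyl \<Delta> (glue' (snd p') (fst p'))"
    using a by (intro cyl_cong) (simp add: glue'_def)
  ultimately show "Gd \<nu> \<Delta> p = Gd \<nu> \<Delta> p'" by (simp add: Gd_def)
qed

lemma gam0_comp_meas:
  assumes k: "k \<in> measurable N (count_space UNIV)" and h: "h \<in> measurable N Omega"
  shows "(\<lambda>p. gam0 \<gamma> (k p) (h p)) \<in> borel_measurable N"
proof (rule measurable_compose_countable'[where I=UNIV and f="\<lambda>a p. gam0 \<gamma> a (h p)", OF _ k])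
  show "countable (UNIV :: 'e set)" by (rule countable_finite) simp
  show "(\<lambda>p. gam0 \<gamma> a (h p)) \<in> borel_measurable N" for a
    by (rule measurable_compose[OF h gam0_meas])
qed

lemma Gl_meas: "Gl \<gamma> \<in> borel_measurable (Omega \<Otimes>\<^sub>M Omega)"
proof -
  have k1: "(\<lambda>p. snd p 0) \<in> measurable (Omega \<Otimes>\<^sub>M Omega) (count_space UNIV)"
    by (rule measurable_compose[OF measurable_snd meas_coord])
  have k2: "(\<lambda>p. fst p 0) \<in> measurable (Omega \<Otimes>\<^sub>M Omega) (count_space UNIV)"
    by (rule measurable_compose[OF measurable_fst meas_coord])
  show ?thesis unfolding Gl_def
    by (intro borel_measurable_diff borel_measurable_ln gam0_comp_meas[OF k1 glue_meas] gam0_comp_meas[OF k2 glue_meas])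
qed

end


locale ms = gs \<gamma> \<nu> for \<gamma> :: "(int^('d::{finite,linorder})) set \<Rightarrow> (int^('d::{finite,linorder}) \<Rightarrow> 'e::finite) \<Rightarrow> (int^('d::{finite,linorder}) \<Rightarrow> 'e::finite) measure"
    and \<nu> :: "(int^('d::{finite,linorder}) \<Rightarrow> 'e::finite) measure" +
  fixes \<mu> lam :: "(int^('d::{finite,linorder}) \<Rightarrow> 'e::finite) measure"
  assumes mu_inv: "inv_measure \<mu>" and lam_inv: "inv_measure lam"
    and C1': "AE p in lam \<Otimes>\<^sub>M \<mu>. glue (snd p) (fst p) \<in> Omega_gamma \<gamma>"
begin

abbreviation "M \<equiv> lam \<Otimes>\<^sub>M \<mu>"

lemma mu_pm: "prob_on_Omega \<mu>" using mu_inv by (simp add: inv_measure_def)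
lemma lam_pm: "prob_on_Omega lam" using lam_inv by (simp add: inv_measure_def)

lemma pps: "pair_prob_space lam \<mu>"
proof -
  interpret L: prob_space lam by (rule pOm_ps[OF lam_pm])
  interpret U: prob_space \<mu> by (rule pOm_ps[OF mu_pm])
  show ?thesis by unfold_locales
qed

lemma M_ps: "prob_space M"
  using pOm_ps[OF lam_pm] pOm_ps[OF mu_pm] by (rule prob_space_pair)

lemma sets_M: "sets M = sets (Omega \<Otimes>\<^sub>M Omega)"
  using lam_pm mu_pm by (intro sets_pair_measure_cong) (auto simp: prob_on_Omega_def)

lemma meas_M: "f \<in> borel_measurable (Omega \<Otimes>\<^sub>M Omega) \<Longrightarrow> f \<in> borel_measurable M"
  using sets_M measurable_cong_sets by blast

lemma int_M:
  fixes f :: "_ \<Rightarrow> real"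
  assumes "f \<in> borel_measurable (Omega \<Otimes>\<^sub>M Omega)" "\<And>p. \<bar>f p\<bar> \<le> B"
  shows "integrable M f"
proof -
  interpret prob_space M by (rule M_ps)
  show ?thesis by (rule integrable_const_bound[where B=B]) (use assms meas_M in auto)
qed

lemma B0: "0 \<le> - ln a0"
  using a0(1) a0_le1 by simp

lemma unif:
  assumes e: "\<epsilon> > 0"
  shows "\<exists>k. \<forall>\<Delta>. finite \<Delta> \<and> Lam k \<subseteq> \<Delta> \<longrightarrow> (\<integral>p. \<bar>Gd \<nu> \<Delta> p - Gl \<gamma> p\<bar> \<partial>M) < \<epsilon>"
proof (rule ccontr)
  assume "\<not> ?thesis"
  then have "\<forall>k. \<exists>\<Delta>. finite \<Delta> \<and> Lam k \<subseteq> \<Delta> \<and> \<epsilon> \<le> (\<integral>p. \<bar>Gd \<nu> \<Delta> p - Gl \<gamma> p\<bar> \<partial>M)"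
    by (auto simp: not_less)
  then have "\<exists>D. \<forall>k. finite (D k) \<and> Lam k \<subseteq> D k \<and> \<epsilon> \<le> (\<integral>p. \<bar>Gd \<nu> (D k) p - Gl \<gamma> p\<bar> \<partial>M)"
    by (rule choice)
  then obtain D where DD: "\<forall>k. finite (D k) \<and> Lam k \<subseteq> D k \<and> \<epsilon> \<le> (\<integral>p. \<bar>Gd \<nu> (D k) p - Gl \<gamma> p\<bar> \<partial>M)"
    by (elim exE)
  have D: "\<And>k. finite (D k)" "\<And>k. Lam k \<subseteq> D k"
      "\<And>k. \<epsilon> \<le> (\<integral>p. \<bar>Gd \<nu> (D k) p - Gl \<gamma> p\<bar> \<partial>M)"
    using DD by simp_all
  interpret prob_space M by (rule M_ps)
  have "(\<lambda>k. \<integral>p. \<bar>Gd \<nu> (D k) p - Gl \<gamma> p\<bar> \<partial>M) \<longlonglongrightarrow> (\<integral>p. 0 \<partial>M)"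
  proof (rule integral_dominated_convergence[where w="\<lambda>_. 2 * (- ln a0)"])
    show "(\<lambda>p. 0::real) \<in> borel_measurable M" by simp
    show "(\<lambda>p. \<bar>Gd \<nu> (D k) p - Gl \<gamma> p\<bar>) \<in> borel_measurable M" for k
      by (intro meas_M borel_measurable_abs borel_measurable_diff Gd_meas Gl_meas D)
    show "integrable M (\<lambda>_. 2 * (- ln a0))" by simp
    show "AE p in M. (\<lambda>k. \<bar>Gd \<nu> (D k) p - Gl \<gamma> p\<bar>) \<longlonglongrightarrow> 0"
      using C1'
    proof eventually_elim
      case (elim p)
      obtain \<xi> \<sigma> where p: "p = (\<xi>, \<sigma>)" by (cases p)
      have "(\<lambda>k. Gd \<nu> (D k) (\<xi>, \<sigma>)) \<longlonglongrightarrow> Gl \<gamma> (\<xi>, \<sigma>)"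
        using elim p by (intro Gd_conv D) auto
      then have "(\<lambda>k. Gd \<nu> (D k) (\<xi>, \<sigma>) - Gl \<gamma> (\<xi>, \<sigma>)) \<longlonglongrightarrow> Gl \<gamma> (\<xi>, \<sigma>) - Gl \<gamma> (\<xi>, \<sigma>)"
        by (intro tendsto_diff tendsto_const)
      then have "(\<lambda>k. Gd \<nu> (D k) p - Gl \<gamma> p) \<longlonglongrightarrow> 0" unfolding p by simp
      then show ?case by (rule tendsto_rabs_zero)
    qed
    show "AE p in M. norm \<bar>Gd \<nu> (D k) p - Gl \<gamma> p\<bar> \<le> 2 * (- ln a0)" for k
    proof (intro AE_I2)
      fix p
      have "0 \<in> D k" using D(2)[of k] zero_Lam by blast
      then have "\<bar>Gd \<nu> (D k) p\<bar> \<le> - ln a0" using D(1) by (intro Gd_bound) auto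
      then show "norm \<bar>Gd \<nu> (D k) p - Gl \<gamma> p\<bar> \<le> 2 * (- ln a0)" using Gl_bound[of p] by simp
    qed
  qed
  then have "(\<lambda>k. \<integral>p. \<bar>Gd \<nu> (D k) p - Gl \<gamma> p\<bar> \<partial>M) \<longlonglongrightarrow> 0" by simp
  then have "eventually (\<lambda>k. (\<integral>p. \<bar>Gd \<nu> (D k) p - Gl \<gamma> p\<bar> \<partial>M) < \<epsilon>) sequentially"
    using e by (rule order_tendstoD)
  then obtain k where "(\<integral>p. \<bar>Gd \<nu> (D k) p - Gl \<gamma> p\<bar> \<partial>M) < \<epsilon>" by (auto simp: eventually_sequentially)
  then show False using D(3)[of k] by simp
qed

lemma shift_inv_M:
  fixes f :: "_ \<Rightarrow> real"
  assumes f: "f \<in> borel_measurable (Omega \<Otimes>\<^sub>M Omega)"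
  shows "(\<integral>p. f (shift x (fst p), shift x (snd p)) \<partial>M) = (\<integral>p. f p \<partial>M)"
proof -
  interpret U: prob_space \<mu> by (rule pOm_ps[OF mu_pm])
  have sl: "shift x \<in> measurable lam Omega" by (rule pOm_meas[OF lam_pm shift_meas])
  have sm: "shift x \<in> measurable \<mu> Omega" by (rule pOm_meas[OF mu_pm shift_meas])
  have sf: "sigma_finite_measure (distr \<mu> Omega (shift x))"
    using mu_inv U.sigma_finite_measure_axioms by (simp add: inv_measure_def)
  have "distr lam Omega (shift x) \<Otimes>\<^sub>M distr \<mu> Omega (shift x) = distr M (Omega \<Otimes>\<^sub>M Omega) (\<lambda>(a, b). (shift x a, shift x b))"
    by (rule pair_measure_distr[OF sl sm sf])
  then have eq: "M = distr M (Omega \<Otimes>\<^sub>M Omega) (\<lambda>(a, b). (shift x a, shift x b))"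
    using mu_inv lam_inv by (simp add: inv_measure_def)
  have T: "(\<lambda>(a, b). (shift x a, shift x b)) \<in> measurable M (Omega \<Otimes>\<^sub>M Omega)"
  proof -
    have m1: "(\<lambda>p. (shift x (fst p), shift x (snd p))) \<in> measurable (Omega \<Otimes>\<^sub>M Omega) (Omega \<Otimes>\<^sub>M Omega)"
      by (intro measurable_Pair measurable_compose[OF measurable_fst shift_meas] measurable_compose[OF measurable_snd shift_meas])
    have e: "(\<lambda>(a, b). (shift x a, shift x b)) = (\<lambda>p. (shift x (fst p), shift x (snd p)))"
      by (simp add: case_prod_beta')
    show ?thesis unfolding measurable_cong_sets[OF sets_M refl] e by (rule m1)
  qed
  have "(\<integral>p. f p \<partial>M) = (\<integral>p. f p \<partial>(distr M (Omega \<Otimes>\<^sub>M Omega) (\<lambda>(a, b). (shift x a, shift x b))))"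
    using eq by simp
  also have "\<dots> = (\<integral>p. f ((\<lambda>(a, b). (shift x a, shift x b)) p) \<partial>M)"
    by (rule integral_distr[OF T f])
  finally show ?thesis by (simp add: case_prod_beta')
qed

definition lnc :: "(int^('d::{finite,linorder})) set \<Rightarrow> (int^('d::{finite,linorder}) \<Rightarrow> 'e) \<Rightarrow> real" where
  "lnc \<Lambda> \<omega> = ln (measure \<nu> (cyl \<Lambda> \<omega>))"

lemma lnc_meas: "finite \<Lambda> \<Longrightarrow> lnc \<Lambda> \<in> borel_measurable Omega"
  unfolding lnc_def by (rule dep_borel) (auto intro!: arg_cong[where f="\<lambda>A. ln (measure \<nu> A)"] cyl_cong)

lemma lnc_bound: "finite \<Lambda> \<Longrightarrow> \<exists>B. \<forall>\<omega>. \<bar>lnc \<Lambda> \<omega>\<bar> \<le> B"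
proof -
  assume L: "finite \<Lambda>"
  obtain a where a: "a > 0" "\<And>s. a \<le> measure \<nu> (cyl \<Lambda> s)" using nu_cyl_lb[OF L] by blast
  have le1: "measure \<nu> (cyl \<Lambda> s) \<le> 1" for s by (rule prob_space.prob_le_1[OF ps])
  have "\<bar>lnc \<Lambda> \<omega>\<bar> \<le> - ln a" for \<omega>
  proof -
    have "ln a \<le> lnc \<Lambda> \<omega>" unfolding lnc_def by (subst ln_le_cancel_iff) (use a(1) a(2)[of \<omega>] in auto)
    moreover have "lnc \<Lambda> \<omega> \<le> 0" unfolding lnc_def using a(1) a(2)[of \<omega>] le1[of \<omega>] by simp
    ultimately show ?thesis by linarith
  qed
  then show ?thesis by blast
qed

lemma marg_snd:
  fixes f :: "_ \<Rightarrow> real"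
  assumes f: "f \<in> borel_measurable Omega" and B: "\<And>\<omega>. \<bar>f \<omega>\<bar> \<le> B"
  shows "(\<integral>p. f (snd p) \<partial>M) = (\<integral>\<sigma>. f \<sigma> \<partial>\<mu>)"
proof -
  interpret pair_prob_space lam \<mu> by (rule pps)
  have i: "integrable M (\<lambda>p. f (snd p))"
    by (rule int_M[where B=B]) (use measurable_compose[OF measurable_snd f] B in auto)
  have "(\<integral>p. f (snd p) \<partial>M) = (\<integral>\<xi>. (\<integral>\<sigma>. f (snd (\<xi>, \<sigma>)) \<partial>\<mu>) \<partial>lam)"
    using integral_fst'[OF i] by simp
  also have "\<dots> = (\<integral>\<sigma>. f \<sigma> \<partial>\<mu>)" by (simp add: M1.prob_space)
  finally show ?thesis .
qed

lemma marg_fst: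
  fixes f :: "_ \<Rightarrow> real"
  assumes f: "f \<in> borel_measurable Omega" and B: "\<And>\<omega>. \<bar>f \<omega>\<bar> \<le> B"
  shows "(\<integral>p. f (fst p) \<partial>M) = (\<integral>\<xi>. f \<xi> \<partial>lam)"
proof -
  interpret pair_prob_space lam \<mu> by (rule pps)
  have i: "integrable M (\<lambda>p. f (fst p))"
    by (rule int_M[where B=B]) (use measurable_compose[OF measurable_fst f] B in auto)
  have "(\<integral>p. f (fst p) \<partial>M) = (\<integral>\<xi>. (\<integral>\<sigma>. f (fst (\<xi>, \<sigma>)) \<partial>\<mu>) \<partial>lam)"
    using integral_fst'[OF i] by simp
  also have "\<dots> = (\<integral>\<xi>. f \<xi> \<partial>lam)" by (simp add: M2.prob_space)
  finally show ?thesis .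
qed

lemma tele_pt:
  assumes L: "finite \<Lambda>"
  shows "lnc \<Lambda> (snd p) - lnc \<Lambda> (fst p) = (\<Sum>x\<in>\<Lambda>. Gd \<nu> ((\<lambda>y. y - x) ` \<Lambda>) (shift x (fst p), shift x (snd p)))"
proof -
  define G where "G U = lnc \<Lambda> (\<lambda>y. if y \<in> U then snd p y else fst p y)" for U
  have t: "(\<Sum>x\<in>\<Lambda>. G {y\<in>\<Lambda>. lex_le y x} - G {y\<in>\<Lambda>. lex_le y x \<and> y \<noteq> x}) = G \<Lambda> - G {}"
    by (rule telescope[OF L])
  have g1: "G \<Lambda> = lnc \<Lambda> (snd p)" unfolding G_def lnc_def
    by (rule arg_cong[where f="\<lambda>A. ln (measure \<nu> A)"], rule cyl_cong) simp
  have g2: "G {} = lnc \<Lambda> (fst p)" unfolding G_def by simp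
  have g3: "G {y\<in>\<Lambda>. lex_le y x} - G {y\<in>\<Lambda>. lex_le y x \<and> y \<noteq> x} =
      Gd \<nu> ((\<lambda>y. y - x) ` \<Lambda>) (shift x (fst p), shift x (snd p))" for x
  proof -
    have "G {y\<in>\<Lambda>. lex_le y x} = lnc \<Lambda> (\<lambda>y. if lex_le y x then snd p y else fst p y)"
      unfolding G_def lnc_def by (rule arg_cong[where f="\<lambda>A. ln (measure \<nu> A)"], rule cyl_cong) simp
    also have "\<dots> = ln (measure \<nu> (cyl ((\<lambda>y. y - x) ` \<Lambda>) (glue (shift x (snd p)) (shift x (fst p)))))"
      unfolding lnc_def nu_cyl_shift[OF L, of _ x] shift_mixle ..
    finally have a: "G {y\<in>\<Lambda>. lex_le y x} = ln (measure \<nu> (cyl ((\<lambda>y. y - x) ` \<Lambda>) (glue (shift x (snd p)) (shift x (fst p)))))" .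
    have "G {y\<in>\<Lambda>. lex_le y x \<and> y \<noteq> x} = lnc \<Lambda> (\<lambda>y. if lex_le y x \<and> y \<noteq> x then snd p y else fst p y)"
      unfolding G_def lnc_def by (rule arg_cong[where f="\<lambda>A. ln (measure \<nu> A)"], rule cyl_cong) simp
    also have "\<dots> = ln (measure \<nu> (cyl ((\<lambda>y. y - x) ` \<Lambda>) (glue' (shift x (snd p)) (shift x (fst p)))))"
      unfolding lnc_def nu_cyl_shift[OF L, of _ x] shift_mixlt ..
    finally have b: "G {y\<in>\<Lambda>. lex_le y x \<and> y \<noteq> x} = ln (measure \<nu> (cyl ((\<lambda>y. y - x) ` \<Lambda>) (glue' (shift x (snd p)) (shift x (fst p)))))" .
    show ?thesis unfolding a b Gd_def by simp
  qed
  show ?thesis using t unfolding g1 g2 g3 by simp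
qed

lemma zero_shift_mem: "(x :: int^('d::{finite,linorder})) \<in> \<Lambda> \<Longrightarrow> 0 \<in> (\<lambda>y. y - x) ` \<Lambda>"
  by (rule image_eqI[where x=x]) simp_all

lemma energy_diff_eq:
  assumes L: "finite \<Lambda>"
  shows "(\<integral>\<sigma>. lnc \<Lambda> \<sigma> \<partial>\<mu>) - (\<integral>\<xi>. lnc \<Lambda> \<xi> \<partial>lam) = (\<Sum>x\<in>\<Lambda>. \<integral>p. Gd \<nu> ((\<lambda>y. y - x) ` \<Lambda>) p \<partial>M)"
proof -
  obtain B where B: "\<And>\<omega>. \<bar>lnc \<Lambda> \<omega>\<bar> \<le> B" using lnc_bound[OF L] by blast
  have m: "lnc \<Lambda> \<in> borel_measurable Omega" by (rule lnc_meas[OF L])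
  have i1: "integrable M (\<lambda>p. lnc \<Lambda> (snd p))"
    by (rule int_M[where B=B]) (use measurable_compose[OF measurable_snd m] B in auto)
  have i2: "integrable M (\<lambda>p. lnc \<Lambda> (fst p))"
    by (rule int_M[where B=B]) (use measurable_compose[OF measurable_fst m] B in auto)
  have Tm: "(\<lambda>p. (shift x (fst p), shift x (snd p))) \<in> measurable (Omega \<Otimes>\<^sub>M Omega) (Omega \<Otimes>\<^sub>M Omega)" for x
    by (intro measurable_Pair measurable_compose[OF measurable_fst shift_meas] measurable_compose[OF measurable_snd shift_meas])
  have i3: "integrable M (\<lambda>p. Gd \<nu> ((\<lambda>y. y - x) ` \<Lambda>) (shift x (fst p), shift x (snd p)))" if x: "x \<in> \<Lambda>" for x
  proof (rule int_M[where B="- ln a0"])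
    show "(\<lambda>p. Gd \<nu> ((\<lambda>y. y - x) ` \<Lambda>) (shift x (fst p), shift x (snd p))) \<in> borel_measurable (Omega \<Otimes>\<^sub>M Omega)"
      using L by (intro measurable_compose[OF Tm Gd_meas]) simp
    show "\<bar>Gd \<nu> ((\<lambda>y. y - x) ` \<Lambda>) (shift x (fst p), shift x (snd p))\<bar> \<le> - ln a0" for p
      using L zero_shift_mem[OF x] by (intro Gd_bound) auto
  qed
  have "(\<integral>\<sigma>. lnc \<Lambda> \<sigma> \<partial>\<mu>) - (\<integral>\<xi>. lnc \<Lambda> \<xi> \<partial>lam) = (\<integral>p. lnc \<Lambda> (snd p) - lnc \<Lambda> (fst p) \<partial>M)"
    using marg_snd[OF m B] marg_fst[OF m B] i1 i2 by simp
  also have "\<dots> = (\<integral>p. (\<Sum>x\<in>\<Lambda>. Gd \<nu> ((\<lambda>y. y - x) ` \<Lambda>) (shift x (fst p), shift x (snd p))) \<partial>M)"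
    by (simp add: tele_pt[OF L])
  also have "\<dots> = (\<Sum>x\<in>\<Lambda>. \<integral>p. Gd \<nu> ((\<lambda>y. y - x) ` \<Lambda>) (shift x (fst p), shift x (snd p)) \<partial>M)"
    by (rule Bochner_Integration.integral_sum[where f="\<lambda>x p. Gd \<nu> ((\<lambda>y. y - x) ` \<Lambda>) (shift x (fst p), shift x (snd p))", OF i3])
  also have "\<dots> = (\<Sum>x\<in>\<Lambda>. \<integral>p. Gd \<nu> ((\<lambda>y. y - x) ` \<Lambda>) p \<partial>M)"
    using L by (intro sum.cong refl shift_inv_M Gd_meas) simp
  finally show ?thesis .
qed

lemma Lam_sub_shift:
  fixes x :: "int^('d::{finite,linorder})"
  assumes kn: "k \<le> n" and x: "x \<in> Lam (n - k)"
  shows "Lam k \<subseteq> (\<lambda>y. y - x) ` Lam n"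
proof
  fix z :: "int^('d::{finite,linorder})" assume z: "z \<in> Lam k"
  have "z + x \<in> Lam n"
  proof -
    have "- int n \<le> (z + x) $ i \<and> (z + x) $ i \<le> int n" for i
    proof -
      have "- int k \<le> z $ i" "z $ i \<le> int k" using z by (auto simp: Lam_def)
      moreover have "- int (n - k) \<le> x $ i" "x $ i \<le> int (n - k)" using x by (auto simp: Lam_def)
      moreover have "int (n - k) = int n - int k" using kn by simp
      ultimately show ?thesis by simp
    qed
    then show ?thesis by (simp add: Lam_def)
  qed
  moreover have "z = (z + x) - x" by simp
  ultimately show "z \<in> (\<lambda>y. y - x) ` Lam n" by blast
qed

lemma sum_split_bound:
  fixes e :: "'a \<Rightarrow> real"
  assumes A: "finite A" and BA: "B \<subseteq> A" and e1: "\<And>x. x \<in> A \<Longrightarrow> e x \<le> c1" and e2: "\<And>x. x \<in> B \<Longrightarrow> e x \<le> c2"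
  shows "(\<Sum>x\<in>A. e x) \<le> real (card B) * c2 + (real (card A) - real (card B)) * c1"
proof -
  have fB: "finite B" using A BA by (rule finite_subset[rotated])
  have "(\<Sum>x\<in>A. e x) = (\<Sum>x\<in>A - B. e x) + (\<Sum>x\<in>B. e x)" by (rule sum.subset_diff[OF BA A])
  also have "(\<Sum>x\<in>A - B. e x) \<le> real (card (A - B)) * c1" using e1 by (intro sum_bounded_above) auto
  also have "(\<Sum>x\<in>B. e x) \<le> real (card B) * c2" using e2 by (intro sum_bounded_above) auto
  also have "real (card (A - B)) = real (card A) - real (card B)"
    using card_Diff_subset[OF fB BA] card_mono[OF A BA] by simp
  finally show ?thesis by simp
qed

lemma energy_lim:
  "(\<lambda>n. ((\<integral>\<sigma>. lnc (Lam n) \<sigma> \<partial>\<mu>) - (\<integral>\<xi>. lnc (Lam n) \<xi> \<partial>lam)) / real (card (Lam n :: (int^('d::{finite,linorder})) set)))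
     \<longlonglongrightarrow> (\<integral>p. Gl \<gamma> p \<partial>M)"
proof (rule LIMSEQ_I)
  fix r :: real assume r: "r > 0"
  interpret P: prob_space M by (rule M_ps)
  define B where "B = - ln a0"
  have B0: "0 \<le> B" unfolding B_def by (rule B0)
  define I where "I = (\<integral>p. Gl \<gamma> p \<partial>M)"
  define Nn where "Nn n = real (card (Lam n :: (int^('d::{finite,linorder})) set))" for n
  have Npos: "Nn n > 0" for n unfolding Nn_def using card_Lam_pos[of n] by simp
  define e where "e n x = (\<integral>p. \<bar>Gd \<nu> ((\<lambda>y. y - x) ` Lam n) p - Gl \<gamma> p\<bar> \<partial>M)" for n x
  have intGl: "integrable M (Gl \<gamma>)" by (rule int_M[OF Gl_meas Gl_bound])
  have intGd: "integrable M (Gd \<nu> ((\<lambda>y. y - x) ` Lam n))" if "x \<in> Lam n" for n x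
    by (rule int_M[OF Gd_meas Gd_bound]) (use zero_shift_mem[OF that] in auto)
  have key: "\<bar>((\<integral>\<sigma>. lnc (Lam n) \<sigma> \<partial>\<mu>) - (\<integral>\<xi>. lnc (Lam n) \<xi> \<partial>lam)) / Nn n - I\<bar> \<le> (\<Sum>x\<in>Lam n. e n x) / Nn n" for n
  proof -
    have "((\<integral>\<sigma>. lnc (Lam n) \<sigma> \<partial>\<mu>) - (\<integral>\<xi>. lnc (Lam n) \<xi> \<partial>lam)) / Nn n - I
        = (\<Sum>x\<in>Lam n. (\<integral>p. Gd \<nu> ((\<lambda>y. y - x) ` Lam n) p \<partial>M) - I) / Nn n"
    proof -
      have nz: "Nn n \<noteq> 0" using Npos[of n] by simp
      have "(\<Sum>x\<in>Lam n. (\<integral>p. Gd \<nu> ((\<lambda>y. y - x) ` Lam n) p \<partial>M) - I) = (\<Sum>x\<in>Lam n. (\<integral>p. Gd \<nu> ((\<lambda>y. y - x) ` Lam n) p \<partial>M)) - Nn n * I"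
        by (simp add: sum_subtractf Nn_def)
      then show ?thesis unfolding energy_diff_eq[OF finite_Lam] using nz by (simp add: diff_divide_distrib)
    qed
    also have "\<bar>\<dots>\<bar> \<le> (\<Sum>x\<in>Lam n. \<bar>(\<integral>p. Gd \<nu> ((\<lambda>y. y - x) ` Lam n) p \<partial>M) - I\<bar>) / Nn n"
      using Npos[of n] by (simp add: divide_right_mono)
    also have "\<dots> \<le> (\<Sum>x\<in>Lam n. e n x) / Nn n"
    proof (intro divide_right_mono sum_mono)
      fix x :: "int^('d::{finite,linorder})" assume x: "x \<in> Lam n"
      have "(\<integral>p. Gd \<nu> ((\<lambda>y. y - x) ` Lam n) p \<partial>M) - I = (\<integral>p. Gd \<nu> ((\<lambda>y. y - x) ` Lam n) p - Gl \<gamma> p \<partial>M)"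
        unfolding I_def using intGd[OF x] intGl by simp
      then show "\<bar>(\<integral>p. Gd \<nu> ((\<lambda>y. y - x) ` Lam n) p \<partial>M) - I\<bar> \<le> e n x"
        unfolding e_def by (simp only: integral_abs_bound)
    qed (use Npos[of n] in auto)
    finally show ?thesis .
  qed
  have e_2B: "e n x \<le> 2 * B" if "x \<in> Lam n" for n x
  proof -
    have "e n x \<le> (\<integral>p. 2 * B \<partial>M)"
      unfolding e_def
    proof (rule integral_mono)
      show "integrable M (\<lambda>p. \<bar>Gd \<nu> ((\<lambda>y. y - x) ` Lam n) p - Gl \<gamma> p\<bar>)"
        using intGd[OF that] intGl by auto
      show "integrable M (\<lambda>p. 2 * B)" by simp
      show "\<bar>Gd \<nu> ((\<lambda>y. y - x) ` Lam n) p - Gl \<gamma> p\<bar> \<le> 2 * B" for p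
        using Gd_bound[of "(\<lambda>y. y - x) ` Lam n" p] zero_shift_mem[OF that] Gl_bound[of p]
        unfolding B_def by auto
    qed
    then show ?thesis by (simp add: P.prob_space)
  qed
  obtain k where k: "\<And>\<Delta>. finite \<Delta> \<Longrightarrow> Lam k \<subseteq> \<Delta> \<Longrightarrow> (\<integral>p. \<bar>Gd \<nu> \<Delta> p - Gl \<gamma> p\<bar> \<partial>M) < r / 2"
    using unif[of "r/2"] r by auto
  have e_small: "e n x \<le> r / 2" if "k \<le> n" "x \<in> Lam (n - k)" for n x
    unfolding e_def using k[OF _ Lam_sub_shift[OF that]] by (simp add: less_imp_le)
  define \<rho> where "\<rho> n = ((2 * real n + (1 - 2 * real k)) / (2 * real n + 1)) ^ CARD('d)" for n
  have \<rho>: "\<rho> \<longlonglongrightarrow> 1" unfolding \<rho>_def by (rule q_lim)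
  have \<rho>eq: "Nn (n - k) / Nn n = \<rho> n" if "k \<le> n" for n
  proof -
    have "real (n - k) = real n - real k" using that by simp
    then show ?thesis unfolding Nn_def card_Lam_real \<rho>_def by (simp add: power_divide algebra_simps)
  qed
  define t where "t = r / (2 * (2 * B + 1))"
  have t: "t > 0" unfolding t_def using r B0 by simp
  obtain N1 where N1: "\<And>n. n \<ge> N1 \<Longrightarrow> dist (\<rho> n) 1 < t"
    using \<rho>[THEN tendstoD, OF t] by (auto simp: eventually_sequentially)
  show "\<exists>no. \<forall>n\<ge>no. norm (((\<integral>\<sigma>. lnc (Lam n) \<sigma> \<partial>\<mu>) - (\<integral>\<xi>. lnc (Lam n) \<xi> \<partial>lam)) / real (card (Lam n :: (int^('d::{finite,linorder})) set)) - I) < r"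
  proof (intro exI allI impI)
    fix n assume n: "max k N1 \<le> n"
    then have kn: "k \<le> n" and nN: "N1 \<le> n" by auto
    have sub: "Lam (n - k) \<subseteq> Lam n" by (rule Lam_mono) simp
    have "(\<Sum>x\<in>Lam n. e n x) \<le> Nn (n - k) * (r / 2) + (Nn n - Nn (n - k)) * (2 * B)"
      unfolding Nn_def by (rule sum_split_bound[OF finite_Lam sub e_2B e_small[OF kn]])
    then have "(\<Sum>x\<in>Lam n. e n x) / Nn n \<le> (Nn (n - k) * (r / 2) + (Nn n - Nn (n - k)) * (2 * B)) / Nn n"
      using Npos[of n] by (simp add: divide_right_mono)
    also have "\<dots> = \<rho> n * (r / 2) + (1 - \<rho> n) * (2 * B)"
    proof -
      have "Nn (n - k) = \<rho> n * Nn n" using \<rho>eq[OF kn] Npos[of n] by (simp add: field_simps)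
      then show ?thesis using Npos[of n] by (simp add: field_simps)
    qed
    also have "\<dots> < r"
    proof -
      have d: "\<bar>\<rho> n - 1\<bar> < t" using N1[OF nN] by (simp add: dist_real_def)
      have \<rho>1: "\<rho> n \<le> 1"
      proof -
        have "Nn (n - k) \<le> Nn n" unfolding Nn_def using card_mono[OF finite_Lam sub] by simp
        then have "Nn (n - k) / Nn n \<le> 1" using Npos[of n] by simp
        then show ?thesis using \<rho>eq[OF kn] by simp
      qed
      have "(1 - \<rho> n) * (2 * B) \<le> t * (2 * B)" using d B0 by (intro mult_right_mono) auto
      also have "t * (2 * B) < r / 2"
      proof -
        have "t * (2 * B) = r / 2 * (2 * B / (2 * B + 1))" unfolding t_def using B0 by (simp add: field_simps)
        also have "\<dots> < r / 2 * 1" using r B0 by (intro mult_strict_left_mono) auto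
        finally show ?thesis by simp
      qed
      finally have "(1 - \<rho> n) * (2 * B) < r / 2" .
      moreover have "\<rho> n * (r / 2) \<le> r / 2" using \<rho>1 r by simp
      ultimately show ?thesis by simp
    qed
    finally have "(\<Sum>x\<in>Lam n. e n x) / Nn n < r" .
    then show "norm (((\<integral>\<sigma>. lnc (Lam n) \<sigma> \<partial>\<mu>) - (\<integral>\<xi>. lnc (Lam n) \<xi> \<partial>lam)) / real (card (Lam n :: (int^('d::{finite,linorder})) set)) - I) < r"
      using key[of n] unfolding Nn_def by simp
  qed
qed

end


lemma int_bdd:
  fixes f :: "_ \<Rightarrow> real"
  assumes pm: "prob_on_Omega \<rho>" and f: "f \<in> borel_measurable Omega" and B: "\<And>\<omega>. \<bar>f \<omega>\<bar> \<le> B"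
  shows "integrable \<rho> f"
proof -
  interpret prob_space \<rho> by (rule pOm_ps[OF pm])
  show ?thesis
  proof (rule integrable_const_bound[where B=B])
    show "AE x in \<rho>. norm (f x) \<le> B" using B by simp
    show "f \<in> borel_measurable \<rho>" by (rule pOm_meas[OF pm f])
  qed
qed

lemma int_dep_sum:
  fixes f :: "(int^('d::{finite,linorder}) \<Rightarrow> 'e::finite) \<Rightarrow> real"
  assumes pm: "prob_on_Omega \<rho>" and L: "finite \<Lambda>"
    and dep: "\<And>\<omega> \<omega>'. (\<forall>x\<in>\<Lambda>. \<omega> x = \<omega>' x) \<Longrightarrow> f \<omega> = f \<omega>'"
  shows "(\<integral>\<omega>. f \<omega> \<partial>\<rho>) = (\<Sum>s\<in>configs \<Lambda>. measure \<rho> (cyl \<Lambda> s) * f s)"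
proof -
  interpret prob_space \<rho> by (rule pOm_ps[OF pm])
  have sets: "cyl \<Lambda> s \<in> sets \<rho>" for s using pm L by (simp add: prob_on_Omega_def)
  have fin: "finite (configs \<Lambda> :: (int^('d::{finite,linorder}) \<Rightarrow> 'e) set)" using L by (rule finite_configs)
  have pt: "f \<omega> = (\<Sum>s\<in>configs \<Lambda>. indicator (cyl \<Lambda> s) \<omega> * f s)" for \<omega>
  proof -
    have ind: "indicator (cyl \<Lambda> s) \<omega> = (if s = restrict \<omega> \<Lambda> then 1 else (0::real))" if "s \<in> configs \<Lambda>" for s
    proof -
      have "\<omega> \<in> cyl \<Lambda> s \<longleftrightarrow> restrict \<omega> \<Lambda> = s" using restrict_cyl[OF that] by blast
      then show ?thesis by (auto simp: indicator_def)
    qed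
    have "(\<Sum>s\<in>configs \<Lambda>. indicator (cyl \<Lambda> s) \<omega> * f s) = (\<Sum>s\<in>configs \<Lambda>. if s = restrict \<omega> \<Lambda> then f s else 0)"
      by (intro sum.cong refl) (simp add: ind)
    also have "\<dots> = f (restrict \<omega> \<Lambda>)"
      using fin by (simp add: sum.delta' configs_def)
    also have "\<dots> = f \<omega>" by (rule dep) simp
    finally show ?thesis by simp
  qed
  have "(\<integral>\<omega>. f \<omega> \<partial>\<rho>) = (\<integral>\<omega>. (\<Sum>s\<in>configs \<Lambda>. indicator (cyl \<Lambda> s) \<omega> * f s) \<partial>\<rho>)"
    by (simp only: pt[symmetric])
  also have "\<dots> = (\<Sum>s\<in>configs \<Lambda>. \<integral>\<omega>. indicator (cyl \<Lambda> s) \<omega> * f s \<partial>\<rho>)"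
    by (rule Bochner_Integration.integral_sum)
       (use sets in \<open>auto intro!: integrable_mult_left integrable_real_indicator simp: emeasure_eq_measure\<close>)
  also have "\<dots> = (\<Sum>s\<in>configs \<Lambda>. measure \<rho> (cyl \<Lambda> s) * f s)"
    using sets by (simp add: sets.Int_space_eq2)
  finally show ?thesis .
qed

context ms
begin

lemma hLam_decomp:
  assumes pmu: "prob_on_Omega \<mu>" and L: "finite \<Lambda>"
  shows "hLam \<Lambda> \<mu> \<nu> = (\<Sum>s\<in>configs \<Lambda>. measure \<mu> (cyl \<Lambda> s) * ln (measure \<mu> (cyl \<Lambda> s))) - (\<integral>\<omega>. lnc \<Lambda> \<omega> \<partial>\<mu>)"
proof -
  have i: "(\<integral>\<omega>. lnc \<Lambda> \<omega> \<partial>\<mu>) = (\<Sum>s\<in>configs \<Lambda>. measure \<mu> (cyl \<Lambda> s) * lnc \<Lambda> s)"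
    by (rule int_dep_sum[OF pmu L]) (auto simp: lnc_def intro!: arg_cong[where f="\<lambda>A. ln (measure \<nu> A)"] cyl_cong)
  have t: "measure \<mu> (cyl \<Lambda> s) * ln (measure \<mu> (cyl \<Lambda> s) / measure \<nu> (cyl \<Lambda> s)) =
      measure \<mu> (cyl \<Lambda> s) * ln (measure \<mu> (cyl \<Lambda> s)) - measure \<mu> (cyl \<Lambda> s) * lnc \<Lambda> s" for s
  proof (cases "measure \<mu> (cyl \<Lambda> s) = 0")
    case False
    then have "measure \<mu> (cyl \<Lambda> s) > 0" using measure_nonneg[of \<mu>] by (metis less_eq_real_def)
    moreover have "measure \<nu> (cyl \<Lambda> s) > 0" using L by (rule nu_cyl_pos)
    ultimately show ?thesis by (simp add: ln_div lnc_def algebra_simps)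
  qed simp
  show ?thesis unfolding hLam_def i by (simp add: t sum_subtractf)
qed

end

lemma convergent_iff_diff:
  fixes f g :: "nat \<Rightarrow> real"
  assumes "convergent (\<lambda>n. f n - g n)"
  shows "convergent f \<longleftrightarrow> convergent g"
proof
  assume "convergent f"
  then have "convergent (\<lambda>n. f n - (f n - g n))" using assms by (rule convergent_diff)
  then show "convergent g" by simp
next
  assume "convergent g"
  then have "convergent (\<lambda>n. g n + (f n - g n))" using assms by (rule convergent_add)
  then show "convergent f" by simp
qed

theorem theorem3p9:
  fixes \<gamma> :: "(int^('d::{finite,linorder})) set \<Rightarrow> (int^('d::{finite,linorder}) \<Rightarrow> 'e::finite) \<Rightarrow> (int^('d::{finite,linorder}) \<Rightarrow> 'e) measure"
    and \<nu> \<mu> lam :: "(int^('d::{finite,linorder}) \<Rightarrow> 'e) measure"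
  assumes spec: "is_specification \<gamma>" and nonnull: "nonnull_spec \<gamma>" and tinv: "trans_inv_spec \<gamma>"
    and nu_gibbs: "gibbs \<gamma> \<nu>" and nu_inv: "inv_measure \<nu>"
    and mu_inv: "inv_measure \<mu>" and lam_inv: "inv_measure lam"
    and C1': "AE p in lam \<Otimes>\<^sub>M \<mu>. glue (snd p) (fst p) \<in> Omega_gamma \<gamma>"
  shows "(convergent (rel_entropy_seq \<mu> \<nu>) \<longleftrightarrow> convergent (energy_seq lam \<nu>))
    \<and> (convergent (rel_entropy_seq \<mu> \<nu>) \<longrightarrow>
         rel_entropy \<mu> \<nu> = - ks_entropy \<mu> + energy lam \<nu>
           - (\<integral>\<xi>. (\<integral>\<sigma>. ln (gamma0 \<gamma> (glue \<sigma> \<xi>) (glue \<sigma> \<xi>) / gamma0 \<gamma> \<xi> (glue \<sigma> \<xi>)) \<partial>\<mu>) \<partial>lam))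
    \<and> (gibbs \<gamma> \<mu> \<and> convergent (energy_seq lam \<nu>) \<longrightarrow>
         (\<lambda>n. (\<integral>\<xi>. ln (measure \<mu> (cyl (Lam n) \<xi>) / measure \<nu> (cyl (Lam n) \<xi>)) \<partial>lam)
               / real (card (Lam n :: (int^('d::{finite,linorder})) set)))
           \<longlonglongrightarrow> rel_entropy \<mu> \<nu>)"
proof -
  interpret ms \<gamma> \<nu> \<mu> lam
    using spec nonnull nu_gibbs nu_inv mu_inv lam_inv C1' by unfold_locales
  have pmu: "prob_on_Omega \<mu>" by (rule mu_pm)
  define N where "N n = real (card (Lam n :: (int^('d::{finite,linorder})) set))" for n
  have Npos: "N n > 0" for n unfolding N_def using card_Lam_pos[of n] by simp
  define hm where "hm n = (\<Sum>s\<in>configs (Lam n). measure \<mu> (cyl (Lam n) s) * ln (measure \<mu> (cyl (Lam n) s))) / N n" for n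
  define I where "I = (\<integral>p. Gl \<gamma> p \<partial>M)"
  define D where "D n = energy_seq lam \<nu> n - energy_seq \<mu> \<nu> n" for n
  have hm_H: "hm n = - (H \<mu> (Lam n) / card (Lam n :: (int^('d::{finite,linorder})) set))" for n
    unfolding hm_def N_def H_formula[OF pmu] by simp
  have hm_conv: "convergent hm"
  proof -
    have "convergent (\<lambda>n. - (H \<mu> (Lam n) / card (Lam n :: (int^('d::{finite,linorder})) set)))"
      using ks_conv[OF mu_inv] by (rule convergent_minus_iff[THEN iffD1])
    moreover have "(\<lambda>n. - (H \<mu> (Lam n) / card (Lam n :: (int^('d::{finite,linorder})) set))) = hm"
      using hm_H by (intro ext) simp
    ultimately show ?thesis by simp
  qed
  have ks: "ks_entropy \<mu> = - lim hm"
    unfolding ks_entropy_def hm_def N_def ..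
  have D_eq: "D n = ((\<integral>\<sigma>. lnc (Lam n) \<sigma> \<partial>\<mu>) - (\<integral>\<xi>. lnc (Lam n) \<xi> \<partial>lam)) / N n" for n
    unfolding D_def energy_seq_def lnc_def N_def by (simp add: diff_divide_distrib)
  have D_lim: "D \<longlonglongrightarrow> I"
    unfolding D_eq N_def I_def by (rule energy_lim)
  have rel_eq: "rel_entropy_seq \<mu> \<nu> n = hm n + energy_seq lam \<nu> n - D n" for n
  proof -
    have "rel_entropy_seq \<mu> \<nu> n = hm n - (\<integral>\<omega>. lnc (Lam n) \<omega> \<partial>\<mu>) / N n"
      unfolding rel_entropy_seq_def hLam_decomp[OF pmu finite_Lam] hm_def N_def by (simp add: diff_divide_distrib)
    also have "\<dots> = hm n + energy_seq \<mu> \<nu> n"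
      unfolding energy_seq_def lnc_def N_def by simp
    finally show ?thesis unfolding D_def by simp
  qed
  have conv_iff: "convergent (rel_entropy_seq \<mu> \<nu>) \<longleftrightarrow> convergent (energy_seq lam \<nu>)"
  proof (rule convergent_iff_diff)
    have "convergent (\<lambda>n. hm n - D n)" using hm_conv D_lim by (intro convergent_diff) (auto simp: convergent_def)
    then show "convergent (\<lambda>n. rel_entropy_seq \<mu> \<nu> n - energy_seq lam \<nu> n)" by (simp add: rel_eq)
  qed
  have I_eq: "I = (\<integral>\<xi>. (\<integral>\<sigma>. ln (gamma0 \<gamma> (glue \<sigma> \<xi>) (glue \<sigma> \<xi>) / gamma0 \<gamma> \<xi> (glue \<sigma> \<xi>)) \<partial>\<mu>) \<partial>lam)"
  proof -
    interpret pair_prob_space lam \<mu> by (rule pps)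
    have iG: "integrable M (Gl \<gamma>)" by (rule int_M[OF Gl_meas Gl_bound])
    have pt: "Gl \<gamma> (\<xi>, \<sigma>) = ln (gamma0 \<gamma> (glue \<sigma> \<xi>) (glue \<sigma> \<xi>) / gamma0 \<gamma> \<xi> (glue \<sigma> \<xi>))" for \<xi> \<sigma>
      unfolding Gl_def gamma0_gam0 using gam0_pos[of "\<sigma> 0" "glue \<sigma> \<xi>"] gam0_pos[of "\<xi> 0" "glue \<sigma> \<xi>"] by (simp add: ln_div)
    show ?thesis unfolding I_def integral_fst'[OF iG, symmetric] pt ..
  qed
  have part1: "convergent (rel_entropy_seq \<mu> \<nu>) \<longrightarrow>
         rel_entropy \<mu> \<nu> = - ks_entropy \<mu> + energy lam \<nu>
           - (\<integral>\<xi>. (\<integral>\<sigma>. ln (gamma0 \<gamma> (glue \<sigma> \<xi>) (glue \<sigma> \<xi>) / gamma0 \<gamma> \<xi> (glue \<sigma> \<xi>)) \<partial>\<mu>) \<partial>lam)"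
  proof
    assume c: "convergent (rel_entropy_seq \<mu> \<nu>)"
    then have cE: "convergent (energy_seq lam \<nu>)" using conv_iff by simp
    have "(\<lambda>n. hm n + energy_seq lam \<nu> n - D n) \<longlonglongrightarrow> lim hm + lim (energy_seq lam \<nu>) - I"
      using hm_conv cE D_lim by (intro tendsto_diff tendsto_add) (auto simp: convergent_LIMSEQ_iff)
    moreover have "rel_entropy_seq \<mu> \<nu> = (\<lambda>n. hm n + energy_seq lam \<nu> n - D n)" using rel_eq by (intro ext) simp
    ultimately have "rel_entropy_seq \<mu> \<nu> \<longlonglongrightarrow> lim hm + lim (energy_seq lam \<nu>) - I" by simp
    then have "rel_entropy \<mu> \<nu> = lim hm + lim (energy_seq lam \<nu>) - I" unfolding rel_entropy_def by (rule limI)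
    then show "rel_entropy \<mu> \<nu> = - ks_entropy \<mu> + energy lam \<nu>
           - (\<integral>\<xi>. (\<integral>\<sigma>. ln (gamma0 \<gamma> (glue \<sigma> \<xi>) (glue \<sigma> \<xi>) / gamma0 \<gamma> \<xi> (glue \<sigma> \<xi>)) \<partial>\<mu>) \<partial>lam)"
      unfolding ks energy_def I_eq[symmetric] by simp
  qed
  have part2: "gibbs \<gamma> \<mu> \<and> convergent (energy_seq lam \<nu>) \<longrightarrow>
         (\<lambda>n. (\<integral>\<xi>. ln (measure \<mu> (cyl (Lam n) \<xi>) / measure \<nu> (cyl (Lam n) \<xi>)) \<partial>lam)
               / real (card (Lam n :: (int^('d::{finite,linorder})) set)))
           \<longlonglongrightarrow> rel_entropy \<mu> \<nu>"
  proof
    assume a: "gibbs \<gamma> \<mu> \<and> convergent (energy_seq lam \<nu>)"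
    interpret m2: ms \<gamma> \<mu> \<mu> lam
      using spec nonnull a mu_inv lam_inv C1' by unfold_locales auto
    define D2 where "D2 n = energy_seq lam \<mu> n - energy_seq \<mu> \<mu> n" for n
    have D2_eq: "D2 n = ((\<integral>\<sigma>. m2.lnc (Lam n) \<sigma> \<partial>\<mu>) - (\<integral>\<xi>. m2.lnc (Lam n) \<xi> \<partial>lam)) / N n" for n
      unfolding D2_def energy_seq_def m2.lnc_def N_def by (simp add: diff_divide_distrib)
    have D2_lim: "D2 \<longlonglongrightarrow> I"
      unfolding D2_eq N_def I_def by (rule m2.energy_lim)
    have Emm: "energy_seq \<mu> \<mu> n = - hm n" for n
    proof -
      have "(\<integral>\<xi>. ln (measure \<mu> (cyl (Lam n) \<xi>)) \<partial>\<mu>) = (\<Sum>s\<in>configs (Lam n). measure \<mu> (cyl (Lam n) s) * ln (measure \<mu> (cyl (Lam n) s)))"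
        by (rule int_dep_sum[OF pmu finite_Lam]) (auto intro!: arg_cong[where f="\<lambda>A. ln (measure \<mu> A)"] cyl_cong)
      then show ?thesis unfolding energy_seq_def hm_def N_def by simp
    qed
    have T_eq: "(\<integral>\<xi>. ln (measure \<mu> (cyl (Lam n) \<xi>) / measure \<nu> (cyl (Lam n) \<xi>)) \<partial>lam) / N n
        = energy_seq lam \<nu> n - energy_seq lam \<mu> n" for n
    proof -
      have pl: "prob_space lam" by (rule pOm_ps[OF lam_pm])
      obtain B1 where B1: "\<And>\<omega>. \<bar>lnc (Lam n) \<omega>\<bar> \<le> B1" using lnc_bound[OF finite_Lam] by blast
      obtain B2 where B2: "\<And>\<omega>. \<bar>m2.lnc (Lam n) \<omega>\<bar> \<le> B2" using m2.lnc_bound[OF finite_Lam] by blast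
      have i1: "integrable lam (lnc (Lam n))"
        by (rule int_bdd[OF lam_pm lnc_meas[OF finite_Lam] B1])
      have i2: "integrable lam (m2.lnc (Lam n))"
        by (rule int_bdd[OF lam_pm m2.lnc_meas[OF finite_Lam] B2])
      have pt: "ln (measure \<mu> (cyl (Lam n) \<xi>) / measure \<nu> (cyl (Lam n) \<xi>)) = m2.lnc (Lam n) \<xi> - lnc (Lam n) \<xi>" for \<xi>
        unfolding lnc_def m2.lnc_def using nu_cyl_pos[OF finite_Lam, of n \<xi>] m2.nu_cyl_pos[OF finite_Lam, of n \<xi>] by (simp add: ln_div)
      have "(\<integral>\<xi>. ln (measure \<mu> (cyl (Lam n) \<xi>) / measure \<nu> (cyl (Lam n) \<xi>)) \<partial>lam) = (\<integral>\<xi>. m2.lnc (Lam n) \<xi> \<partial>lam) - (\<integral>\<xi>. lnc (Lam n) \<xi> \<partial>lam)"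
        unfolding pt using i1 i2 by simp
      then show ?thesis unfolding energy_seq_def lnc_def m2.lnc_def N_def by (simp add: diff_divide_distrib)
    qed
    have cR: "convergent (rel_entropy_seq \<mu> \<nu>)" using a conv_iff by simp
    then have R: "rel_entropy_seq \<mu> \<nu> \<longlonglongrightarrow> rel_entropy \<mu> \<nu>"
      unfolding rel_entropy_def by (simp add: convergent_LIMSEQ_iff)
    have "(\<lambda>n. rel_entropy_seq \<mu> \<nu> n + (D n - D2 n)) \<longlonglongrightarrow> rel_entropy \<mu> \<nu> + (I - I)"
      using R D_lim D2_lim by (intro tendsto_add tendsto_diff)
    moreover have "rel_entropy_seq \<mu> \<nu> n + (D n - D2 n) = (\<integral>\<xi>. ln (measure \<mu> (cyl (Lam n) \<xi>) / measure \<nu> (cyl (Lam n) \<xi>)) \<partial>lam) / N n" for n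
      unfolding T_eq rel_eq D2_def using Emm[of n] by simp
    ultimately show "(\<lambda>n. (\<integral>\<xi>. ln (measure \<mu> (cyl (Lam n) \<xi>) / measure \<nu> (cyl (Lam n) \<xi>)) \<partial>lam)
               / real (card (Lam n :: (int^('d::{finite,linorder})) set)))
           \<longlonglongrightarrow> rel_entropy \<mu> \<nu>" unfolding N_def by simp
  qed
  show ?thesis using conv_iff part1 part2 by blast
qed

end
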